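(* Let $k$ be a positive integer and let $\Pi_0,\Pi_1,\Pi\in\mathrm{Part}_2(2k)$, with $\Pi_0$ and $\Pi_1$ perfect matchings, and assume $\#(\Pi_0\vee\Pi_1\vee\Pi)=1$. Then $$\#(\Pi_0\vee\Pi)+\#(\Pi_1\vee\Pi)\le 1+\#\Pi\le k+1,$$ and moreover, writing $r=\#(\Pi_0\vee\Pi_1)$, if $r>1$ then $$\#(\Pi_0\vee\Pi)+\#(\Pi_1\vee\Pi)\le k+1-\lfloor r/2\rfloor.$$
   Context: $\mathrm{Part}(k)$ is the set of set partitions of $\{1,\dots,k\}$ (families of nonempty pairwise disjoint subsets, called parts, whose union is $\{1,\dots,k\}$). $\Sigma$ refines $\Pi$ if every part of $\Sigma$ is contained in a part of $\Pi$. $\Pi\vee\Sigma$ is the finest partition refined by both $\Pi$ and $\Sigma$. A perfect matching is a partition all of whose parts have cardinality 2. $\mathrm{Part}_2(k)$ is the set of partitions all of whose parts have cardinality at least 2. $\#S$ is the cardinality of $S$ and $\lfloor x\rfloor$ the integer part. *)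

theory Defs
  imports Main
begin

definition is_partition :: "'a set \<Rightarrow> 'a set set \<Rightarrow> bool" where
  "is_partition S P \<longleftrightarrow> (\<forall>B\<in>P. B \<noteq> {}) \<and>
     (\<forall>B\<in>P. \<forall>C\<in>P. B \<noteq> C \<longrightarrow> B \<inter> C = {}) \<and> \<Union>P = S"

definition Part :: "nat \<Rightarrow> nat set set set" where
  "Part k = {P. is_partition {1..k} P}"

definition Part2 :: "nat \<Rightarrow> nat set set set" where
  "Part2 k = {P \<in> Part k. \<forall>B\<in>P. 2 \<le> card B}"

definition perfect_matching :: "'a set set \<Rightarrow> bool" where
  "perfect_matching P \<longleftrightarrow> (\<forall>B\<in>P. card B = 2)"

definition refines :: "'a set set \<Rightarrow> 'a set set \<Rightarrow> bool" where
  "refines \<Sigma> \<Pi> \<longleftrightarrow> (\<forall>B\<in>\<Sigma>. \<exists>C\<in>\<Pi>. B \<subseteq> C)"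

definition join :: "'a set \<Rightarrow> 'a set set \<Rightarrow> 'a set set \<Rightarrow> 'a set set" where
  "join S P Q = (THE R. is_partition S R \<and> refines P R \<and> refines Q R \<and>
     (\<forall>R'. is_partition S R' \<and> refines P R' \<and> refines Q R' \<longrightarrow> refines R R'))"

end

theory Submission
  imports Defs
begin

definition hrel :: "'a set set \<Rightarrow> ('a \<times> 'a) set" where
  "hrel F = {(x,y). \<exists>e\<in>F. x \<in> e \<and> y \<in> e}"

definition ceq :: "'a set \<Rightarrow> 'a set set \<Rightarrow> ('a \<times> 'a) set" where
  "ceq S F = {(x,y). x \<in> S \<and> y \<in> S \<and> (x,y) \<in> (hrel F)\<^sup>*}"

definition ncomp :: "'a set \<Rightarrow> 'a set set \<Rightarrow> nat" where
  "ncomp S F = card (S // ceq S F)"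

lemma hrel_sym: "(x,y) \<in> hrel F \<Longrightarrow> (y,x) \<in> hrel F"
  by (auto simp: hrel_def)

lemma rtrancl_hrel_sym: "(x,y) \<in> (hrel F)\<^sup>* \<Longrightarrow> (y,x) \<in> (hrel F)\<^sup>*"
proof (induction rule: rtrancl_induct)
  case base then show ?case by simp
next
  case (step y z)
  then show ?case by (meson converse_rtrancl_into_rtrancl hrel_sym)
qed

lemma equiv_ceq: "equiv S (ceq S F)"
  unfolding equiv_def refl_on_def sym_def trans_def ceq_def
  by (auto intro: rtrancl_hrel_sym rtrancl_trans)

lemma ceq_subset: "ceq S F \<subseteq> S \<times> S" by (auto simp: ceq_def)

lemma finite_quot_ceq: "finite S \<Longrightarrow> finite (S // ceq S F)"
  by (rule finite_quotient[OF _ ceq_subset])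

lemma hrel_mono: "F \<subseteq> G \<Longrightarrow> hrel F \<subseteq> hrel G"
  by (auto simp: hrel_def)

lemma ceq_mono: "F \<subseteq> G \<Longrightarrow> ceq S F \<subseteq> ceq S G"
  unfolding ceq_def using rtrancl_mono[OF hrel_mono] by blast

lemma hrel_in_ceq: "(x,y) \<in> hrel F \<Longrightarrow> x \<in> S \<Longrightarrow> y \<in> S \<Longrightarrow> (x,y) \<in> ceq S F"
  by (auto simp: ceq_def)

lemma edge_in_ceq: "e \<in> F \<Longrightarrow> x \<in> e \<Longrightarrow> y \<in> e \<Longrightarrow> x \<in> S \<Longrightarrow> y \<in> S \<Longrightarrow> (x,y) \<in> ceq S F"
  by (auto simp: ceq_def hrel_def)

lemma ceq_sub_gen:
  assumes "equiv S E" "S' \<subseteq> S"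
    and "\<And>e x y. e \<in> F' \<Longrightarrow> x \<in> e \<Longrightarrow> y \<in> e \<Longrightarrow> x \<in> S' \<Longrightarrow> y \<in> S' \<Longrightarrow> (x,y) \<in> E"
    and "\<Union>F' \<subseteq> S'"
  shows "ceq S' F' \<subseteq> E"
proof
  fix p assume "p \<in> ceq S' F'"
  then obtain x y where p: "p = (x,y)" "x \<in> S'" "y \<in> S'" "(x,y) \<in> (hrel F')\<^sup>*"
    by (auto simp: ceq_def)
  have "(x,y) \<in> E" using p(4)
  proof (induction rule: rtrancl_induct)
    case base then show ?case using assms(1,2) p(2) by (auto simp: equiv_def refl_on_def)
  next
    case (step y z)
    then obtain e where e: "e \<in> F'" "y \<in> e" "z \<in> e" by (auto simp: hrel_def)
    then have "y \<in> S'" "z \<in> S'" using assms(4) by auto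
    then have "(y,z) \<in> E" using assms(3) e by blast
    then show ?case using step.IH assms(1) by (meson equivE transE)
  qed
  then show "p \<in> E" using p by simp
qed

lemma quot_card_lower:
  assumes fin: "finite S" and sub: "S' \<subseteq> S"
    and E: "equiv S E" and E': "equiv S' E'" and EE: "E' \<subseteq> E"
  shows "card (S // E) \<le> card (S' // E') + card {K \<in> S // E. K \<inter> S' = {}}"
    and "x \<in> S' \<Longrightarrow> y \<in> S' \<Longrightarrow> (x,y) \<in> E \<Longrightarrow> (x,y) \<notin> E' \<Longrightarrow>
          card (S // E) + 1 \<le> card (S' // E') + card {K \<in> S // E. K \<inter> S' = {}}"
proof -
  define f where "f K = E `` K" for K
  have finS': "finite S'" using fin sub finite_subset by blast
  have fq': "finite (S' // E')" using finS' E' by (simp add: equiv_type finite_quotient)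
  have img: "{K \<in> S // E. K \<inter> S' \<noteq> {}} = f ` (S' // E')"
  proof
    show "{K \<in> S // E. K \<inter> S' \<noteq> {}} \<subseteq> f ` (S' // E')"
    proof
      fix K assume "K \<in> {K \<in> S // E. K \<inter> S' \<noteq> {}}"
      then obtain x where K: "K \<in> S // E" "x \<in> K" "x \<in> S'" by auto
      have "K = E `` {x}" using K E by (metis Image_singleton_iff equiv_class_eq_iff quotientE)
      moreover have "E `` (E' `` {x}) = E `` {x}"
      proof
        show "E `` (E' `` {x}) \<subseteq> E `` {x}" using EE E by (auto) (meson equivE subsetD transE)
        show "E `` {x} \<subseteq> E `` (E' `` {x})" using E' K(3) by (auto simp: equiv_def refl_on_def)
      qed
      ultimately show "K \<in> f ` (S' // E')" using K(3) unfolding f_def quotient_def by auto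
    qed
    show "f ` (S' // E') \<subseteq> {K \<in> S // E. K \<inter> S' \<noteq> {}}"
    proof
      fix K assume "K \<in> f ` (S' // E')"
      then obtain x where x: "x \<in> S'" "K = E `` (E' `` {x})" unfolding f_def quotient_def by auto
      have "E `` (E' `` {x}) = E `` {x}"
      proof
        show "E `` (E' `` {x}) \<subseteq> E `` {x}" using EE E by (auto) (meson equivE subsetD transE)
        show "E `` {x} \<subseteq> E `` (E' `` {x})" using E' x(1) by (auto simp: equiv_def refl_on_def)
      qed
      moreover have "x \<in> E `` {x}" using E x sub by (auto simp: equiv_def refl_on_def)
      ultimately show "K \<in> {K \<in> S // E. K \<inter> S' \<noteq> {}}" using x sub unfolding quotient_def by auto
    qed
  qed
  have split: "S // E = {K \<in> S // E. K \<inter> S' \<noteq> {}} \<union> {K \<in> S // E. K \<inter> S' = {}}" by auto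
  have c1: "card (S // E) \<le> card {K \<in> S // E. K \<inter> S' \<noteq> {}} + card {K \<in> S // E. K \<inter> S' = {}}"
    by (subst split) (rule card_Un_le)
  have c2: "card {K \<in> S // E. K \<inter> S' \<noteq> {}} = card (f ` (S' // E'))" using img by simp
  show "card (S // E) \<le> card (S' // E') + card {K \<in> S // E. K \<inter> S' = {}}"
    using c1 c2 card_image_le[OF fq', of f] by linarith
  assume xy: "x \<in> S'" "y \<in> S'" "(x,y) \<in> E" "(x,y) \<notin> E'"
  have "\<not> inj_on f (S' // E')"
  proof
    assume inj: "inj_on f (S' // E')"
    have q: "E' `` {x} \<in> S' // E'" "E' `` {y} \<in> S' // E'" using xy by (auto intro: quotientI)
    have "f (E' `` {x}) = f (E' `` {y})"
    proof -
      have "\<And>z. z \<in> S' \<Longrightarrow> f (E' `` {z}) = E `` {z}"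
      proof -
        fix z assume z: "z \<in> S'"
        show "f (E' `` {z}) = E `` {z}" unfolding f_def
        proof
          show "E `` (E' `` {z}) \<subseteq> E `` {z}" using EE E by (auto) (meson equivE subsetD transE)
          show "E `` {z} \<subseteq> E `` (E' `` {z})" using E' z by (auto simp: equiv_def refl_on_def)
        qed
      qed
      then show ?thesis using xy E by (metis equiv_class_eq)
    qed
    then have "E' `` {x} = E' `` {y}" using inj q by (meson inj_onD)
    then show False using xy E' by (metis eq_equiv_class_iff)
  qed
  then have "card (f ` (S' // E')) < card (S' // E')"
    using fq' card_image_le[OF fq', of f] by (metis inj_on_iff_eq_card le_neq_implies_less)
  then show "card (S // E) + 1 \<le> card (S' // E') + card {K \<in> S // E. K \<inter> S' = {}}"
    using c1 c2 by linarith
qed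

lemma rtrancl_insert_edge:
  assumes "(x,y) \<in> (hrel (insert {a,b} F))\<^sup>*"
  shows "(x,y) \<in> (hrel F)\<^sup>* \<or> ((x,a) \<in> (hrel F)\<^sup>* \<and> (b,y) \<in> (hrel F)\<^sup>*)
        \<or> ((x,b) \<in> (hrel F)\<^sup>* \<and> (a,y) \<in> (hrel F)\<^sup>*)"
  using assms
proof (induction rule: rtrancl_induct)
  case base then show ?case by simp
next
  case (step y z)
  from step.hyps(2) have "(y,z) \<in> hrel F \<or> (y \<in> {a,b} \<and> z \<in> {a,b})"
    by (auto simp: hrel_def)
  then show ?case
  proof
    assume "(y,z) \<in> hrel F"
    then show ?case using step.IH by (meson rtrancl.rtrancl_into_rtrancl)
  next
    assume yz: "y \<in> {a,b} \<and> z \<in> {a,b}"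
    have r: "(a,a) \<in> (hrel F)\<^sup>*" "(b,b) \<in> (hrel F)\<^sup>*" by auto
    show ?case using step.IH yz r by blast
  qed
qed

lemma ceq_insert_edge_same:
  assumes "(a,b) \<in> ceq S F"
  shows "ceq S (insert {a,b} F) = ceq S F"
proof
  show "ceq S F \<subseteq> ceq S (insert {a,b} F)" by (rule ceq_mono) auto
  show "ceq S (insert {a,b} F) \<subseteq> ceq S F"
  proof
    fix p assume "p \<in> ceq S (insert {a,b} F)"
    then obtain x y where p: "p = (x,y)" "x \<in> S" "y \<in> S" "(x,y) \<in> (hrel (insert {a,b} F))\<^sup>*"
      by (auto simp: ceq_def)
    have ab: "(a,b) \<in> (hrel F)\<^sup>*" "(b,a) \<in> (hrel F)\<^sup>*" using assms by (auto simp: ceq_def intro: rtrancl_hrel_sym)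
    from rtrancl_insert_edge[OF p(4)] have "(x,y) \<in> (hrel F)\<^sup>*"
      using ab by (meson rtrancl_trans)
    then show "p \<in> ceq S F" using p by (auto simp: ceq_def)
  qed
qed

lemma ncomp_insert_edge:
  assumes fin: "finite S" and ab: "a \<in> S" "b \<in> S"
  shows "card (S // ceq S F) \<le> card (S // ceq S (insert {a,b} F)) + 1"
proof -
  define E where "E = ceq S F"
  define E2 where "E2 = ceq S (insert {a,b} F)"
  have eqE: "equiv S E" "equiv S E2" unfolding E_def E2_def by (rule equiv_ceq)+
  have EE: "E \<subseteq> E2" unfolding E_def E2_def by (rule ceq_mono) auto
  define Q where "Q = S // E - {E `` {b}}"
  define g where "g K = E2 `` K" for K
  have gcl: "g (E `` {x}) = E2 `` {x}" if "x \<in> S" for x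
    unfolding g_def
  proof
    show "E2 `` (E `` {x}) \<subseteq> E2 `` {x}" using EE eqE(2) by auto (meson equivE subsetD transE)
    show "E2 `` {x} \<subseteq> E2 `` (E `` {x})" using eqE(1) that by (auto simp: equiv_def refl_on_def)
  qed
  have inj: "inj_on g Q"
  proof (rule inj_onI)
    fix K1 K2 assume K: "K1 \<in> Q" "K2 \<in> Q" "g K1 = g K2"
    obtain x where x: "x \<in> S" "K1 = E `` {x}" using K(1) unfolding Q_def by (auto elim: quotientE)
    obtain y where y: "y \<in> S" "K2 = E `` {y}" using K(2) unfolding Q_def by (auto elim: quotientE)
    have "E2 `` {x} = E2 `` {y}" using K(3) x y gcl by simp
    then have "(x,y) \<in> E2" using eqE(2) x y by (metis eq_equiv_class_iff)
    then have "(x,y) \<in> (hrel (insert {a,b} F))\<^sup>*" unfolding E2_def ceq_def by auto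
    from rtrancl_insert_edge[OF this]
    have "(x,y) \<in> E \<or> ((x,a) \<in> E \<and> (b,y) \<in> E) \<or> ((x,b) \<in> E \<and> (a,y) \<in> E)"
      unfolding E_def ceq_def using x y ab by auto
    moreover have "K1 \<noteq> E `` {b}" "K2 \<noteq> E `` {b}" using K unfolding Q_def by auto
    moreover have "\<And>u v. (u,v) \<in> E \<Longrightarrow> E `` {u} = E `` {v}" using eqE(1) by (simp add: equiv_class_eq)
    moreover have "\<And>u v. (u,v) \<in> E \<Longrightarrow> (v,u) \<in> E" using eqE(1) by (meson equivE symE)
    ultimately show "K1 = K2" using x y by metis
  qed
  have sub: "g ` Q \<subseteq> S // E2"
  proof
    fix L assume "L \<in> g ` Q"
    then obtain x where "x \<in> S" "L = g (E `` {x})" unfolding Q_def by (auto elim: quotientE)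
    then show "L \<in> S // E2" using gcl by (auto intro: quotientI)
  qed
  have fq2: "finite (S // E2)" unfolding E2_def by (rule finite_quot_ceq[OF fin])
  have fq: "finite (S // E)" unfolding E_def by (rule finite_quot_ceq[OF fin])
  have "card Q = card (g ` Q)" using inj by (simp add: card_image)
  also have "\<dots> \<le> card (S // E2)" using card_mono[OF fq2 sub] .
  finally have "card Q \<le> card (S // E2)" .
  moreover have "card (S // E) \<le> card Q + 1" unfolding Q_def
    by (simp add: card_Diff_singleton_if) arith
  ultimately show ?thesis unfolding E_def E2_def by linarith
qed

lemma quot_card_upper:
  assumes fin: "finite S" and sub: "S' \<subseteq> S"
    and E: "equiv S E" and E': "equiv S' E'" and EE: "E' \<subseteq> E"
    and K0: "K0 \<in> S // E"
    and unch: "\<And>x y. x \<in> S' \<Longrightarrow> x \<notin> K0 \<Longrightarrow> (x,y) \<in> E \<Longrightarrow> (x,y) \<in> E'"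
    and port: "\<And>x. x \<in> S' \<Longrightarrow> x \<in> K0 \<Longrightarrow> \<exists>p\<in>P. (x,p) \<in> E'"
    and finP: "finite P"
  shows "card (S' // E') + 1 \<le> card (S // E) + card ((\<lambda>p. E' `` {p}) ` P)"
proof -
  have fq: "finite (S // E)" using fin E by (simp add: equiv_type finite_quotient)
  have finS': "finite S'" using fin sub finite_subset by blast
  have fP: "finite ((\<lambda>p. E' `` {p}) ` P)" using finP by simp
  have sub2: "S' // E' \<subseteq> (S // E - {K0}) \<union> (\<lambda>p. E' `` {p}) ` P"
  proof
    fix L assume "L \<in> S' // E'"
    then obtain x where x: "x \<in> S'" "L = E' `` {x}" by (auto elim: quotientE)
    show "L \<in> (S // E - {K0}) \<union> (\<lambda>p. E' `` {p}) ` P"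
    proof (cases "x \<in> K0")
      case True
      then obtain p where p: "p \<in> P" "(x,p) \<in> E'" using port x by blast
      then have "E' `` {x} = E' `` {p}" using E' by (simp add: equiv_class_eq)
      then have "L = (\<lambda>p. E' `` {p}) p" using x by simp
      then have "L \<in> (\<lambda>p. E' `` {p}) ` P" using p(1) by (rule image_eqI)
      then show ?thesis by (rule UnI2)
    next
      case False
      have "E' `` {x} = E `` {x}"
      proof
        show "E' `` {x} \<subseteq> E `` {x}" using EE by auto
        show "E `` {x} \<subseteq> E' `` {x}" using unch[OF x(1) False] by auto
      qed
      moreover have "E `` {x} \<in> S // E" using x sub by (auto intro: quotientI)
      moreover have "E `` {x} \<noteq> K0"
      proof
        assume "E `` {x} = K0"
        moreover have "x \<in> E `` {x}" using E x sub by (auto simp: equiv_def refl_on_def)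
        ultimately show False using False by simp
      qed
      ultimately have "L \<in> S // E - {K0}" using x by simp
      then show ?thesis by (rule UnI1)
    qed
  qed
  have fin2: "finite ((S // E - {K0}) \<union> (\<lambda>p. E' `` {p}) ` P)" using fq fP by blast
  have "card (S' // E') \<le> card ((S // E - {K0}) \<union> (\<lambda>p. E' `` {p}) ` P)"
    by (rule card_mono[OF fin2 sub2])
  also have "\<dots> \<le> card (S // E - {K0}) + card ((\<lambda>p. E' `` {p}) ` P)" by (rule card_Un_le)
  finally have c1: "card (S' // E') \<le> card (S // E - {K0}) + card ((\<lambda>p. E' `` {p}) ` P)" .
  have "S // E \<noteq> {}" using K0 by auto
  then have "card (S // E) > 0" using fq by (simp add: card_gt_0_iff)
  then have "card (S // E - {K0}) + 1 = card (S // E)" using K0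
    by (simp add: card_Diff_singleton_if)
  then show ?thesis using c1 by linarith
qed

lemma even_closed:
  assumes "finite Z" "\<And>x. x \<in> Z \<Longrightarrow> M x \<in> Z \<and> M x \<noteq> x \<and> M (M x) = x"
  shows "even (card Z)"
  using assms
proof (induction "card Z" arbitrary: Z rule: less_induct)
  case less
  show ?case
  proof (cases "Z = {}")
    case True then show ?thesis by simp
  next
    case False
    then obtain x where x: "x \<in> Z" by auto
    define Z' where "Z' = Z - {x, M x}"
    have Mx: "M x \<in> Z" "M x \<noteq> x" "M (M x) = x" using less.prems(2)[OF x] by auto
    have cZ: "card Z = card Z' + 2"
    proof -
      have "card Z' = card Z - card {x, M x}" unfolding Z'_def using x Mx less.prems(1)
        by (subst card_Diff_subset) auto
      moreover have "card {x, M x} = 2" using Mx by auto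
      moreover have "card Z \<ge> 2" using x Mx less.prems(1)
        by (metis \<open>card {x, M x} = 2\<close> card_mono empty_subsetI insert_subset)
      ultimately show ?thesis by linarith
    qed
    have "even (card Z')"
    proof (rule less.hyps)
      show "card Z' < card Z" using cZ by simp
      show "finite Z'" unfolding Z'_def using less.prems(1) by simp
      fix y assume y: "y \<in> Z'"
      then have "y \<in> Z" "y \<noteq> x" "y \<noteq> M x" unfolding Z'_def by auto
      then show "M y \<in> Z' \<and> M y \<noteq> y \<and> M (M y) = y" using less.prems(2) Mx unfolding Z'_def
        by (metis Diff_iff insertE singletonD)
    qed
    then show ?thesis using cZ by simp
  qed
qed

lemma J_bound:
  assumes E: "equiv S E" and ab: "(a,b) \<in> E" and fin: "finite S"
  shows "card {K \<in> S // E. K \<inter> (S - {a,b}) = {}} \<le> (if E `` {a} \<subseteq> {a,b} then 1 else 0)"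
proof -
  define J where "J = {K \<in> S // E. K \<inter> (S - {a,b}) = {}}"
  have sub: "J \<subseteq> {K \<in> {E `` {a}}. E `` {a} \<subseteq> {a,b}}"
  proof
    fix K assume K: "K \<in> J"
    then obtain x where x: "x \<in> S" "K = E `` {x}" unfolding J_def by (auto elim: quotientE)
    have "x \<in> K" using x E by (auto simp: equiv_def refl_on_def)
    then have "x \<in> {a,b}" using K x unfolding J_def by auto
    then have "(x,a) \<in> E" using ab E x by (auto elim!: equivE simp: sym_def refl_on_def)
    then have "K = E `` {a}" using x E by (simp add: equiv_class_eq)
    moreover have "K \<subseteq> S" using K E in_quotient_imp_subset unfolding J_def by blast
    moreover have "K \<subseteq> {a,b}" using K calculation(2) unfolding J_def by blast
    ultimately show "K \<in> {K \<in> {E `` {a}}. E `` {a} \<subseteq> {a,b}}" by auto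
  qed
  have "card J \<le> (if E `` {a} \<subseteq> {a,b} then 1 else 0)"
  proof (cases "E `` {a} \<subseteq> {a,b}")
    case True
    have "J \<subseteq> {E `` {a}}" using sub by blast
    then have "card J \<le> card {E `` {a}}" by (intro card_mono) auto
    then show ?thesis using True by simp
  next
    case False
    then have "J = {}" using sub by blast
    then show ?thesis by simp
  qed
  then show ?thesis unfolding J_def .
qed


definition invol :: "'a set \<Rightarrow> ('a \<Rightarrow> 'a) \<Rightarrow> bool" where
  "invol S M \<longleftrightarrow> (\<forall>x\<in>S. M x \<in> S \<and> M x \<noteq> x \<and> M (M x) = x)"

definition medges :: "'a set \<Rightarrow> ('a \<Rightarrow> 'a) \<Rightarrow> 'a set set" where
  "medges S M = (\<lambda>x. {x, M x}) ` S"

definition rew :: "'a \<Rightarrow> 'a \<Rightarrow> ('a \<Rightarrow> 'a) \<Rightarrow> 'a \<Rightarrow> 'a" where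
  "rew a b M x = (if M x = a then M b else if M x = b then M a else M x)"

definition cA :: "'a \<Rightarrow> 'a \<Rightarrow> 'a set set \<Rightarrow> 'a set set" where
  "cA a b A = (\<lambda>u. u - {a,b}) ` A - {{}}"

lemma hrel_I: "e \<in> F \<Longrightarrow> x \<in> e \<Longrightarrow> y \<in> e \<Longrightarrow> (x,y) \<in> hrel F"
  by (auto simp: hrel_def)

lemma hrel_E: "(x,y) \<in> hrel F \<Longrightarrow> (\<And>e. e \<in> F \<Longrightarrow> x \<in> e \<Longrightarrow> y \<in> e \<Longrightarrow> P) \<Longrightarrow> P"
  by (auto simp: hrel_def)

lemma hrel_Un: "hrel (F \<union> G) = hrel F \<union> hrel G"
  by (auto simp: hrel_def)

lemma hrel_medges:
  assumes "invol S M"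
  shows "(x,y) \<in> hrel (medges S M) \<longleftrightarrow> x \<in> S \<and> (y = x \<or> y = M x)"
proof
  assume "(x,y) \<in> hrel (medges S M)"
  then obtain z where z: "z \<in> S" "x \<in> {z, M z}" "y \<in> {z, M z}" by (auto simp: hrel_def medges_def)
  then show "x \<in> S \<and> (y = x \<or> y = M x)" using assms unfolding invol_def by auto
next
  assume "x \<in> S \<and> (y = x \<or> y = M x)"
  then show "(x,y) \<in> hrel (medges S M)" by (auto simp: hrel_def medges_def)
qed

lemma medges_sub: "invol S M \<Longrightarrow> \<Union>(medges S M) \<subseteq> S"
  by (auto simp: medges_def invol_def)

lemma invol_rew:
  assumes M: "invol S M" and ab: "a \<in> S" "b \<in> S" "a \<noteq> b"
  shows "invol (S - {a,b}) (rew a b M)"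
  unfolding invol_def
proof
  fix x assume x: "x \<in> S - {a,b}"
  have Mx: "M x \<in> S" "M x \<noteq> x" "M (M x) = x" using M x unfolding invol_def by auto
  have Ma: "M a \<in> S" "M a \<noteq> a" "M (M a) = a" using M ab unfolding invol_def by auto
  have Mb: "M b \<in> S" "M b \<noteq> b" "M (M b) = b" using M ab unfolding invol_def by auto
  show "rew a b M x \<in> S - {a,b} \<and> rew a b M x \<noteq> x \<and> rew a b M (rew a b M x) = x"
  proof (cases "M x = a")
    case True
    then have xa: "x = M a" using Mx by metis
    have "M b \<noteq> a"
    proof
      assume "M b = a" then have "M a = b" using Mb by metis
      then show False using xa x by auto
    qed
    moreover have "M b \<noteq> x" using xa Ma Mb ab by metis
    ultimately show ?thesis using True Mb Ma xa x unfolding rew_def by auto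
  next
    case False
    show ?thesis
    proof (cases "M x = b")
      case True
      then have xb: "x = M b" using Mx by metis
      have "M a \<noteq> b"
      proof
        assume "M a = b" then have "M b = a" using Ma by metis
        then show False using xb x by auto
      qed
      moreover have "M a \<noteq> x" using xb Ma Mb ab by metis
      ultimately show ?thesis using True False Mb Ma xb x unfolding rew_def by auto
    next
      case False2: False
      show ?thesis using False False2 Mx x unfolding rew_def by auto
    qed
  qed
qed

lemma partition_card_sum:
  assumes "finite S" "is_partition S P"
  shows "card S = (\<Sum>u\<in>P. card u)"
proof -
  have fP: "finite P" using assms unfolding is_partition_def
    by (metis Sup_upper finite_Pow_iff finite_subset subsetI Pow_iff)
  have "card (\<Union>P) = (\<Sum>u\<in>P. card u)"
  proof (rule card_Union_disjoint)
    show "pairwise disjnt P" using assms(2) unfolding is_partition_def pairwise_def disjnt_def by blast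
    show "\<And>u. u \<in> P \<Longrightarrow> finite u" using assms unfolding is_partition_def
      by (metis Sup_upper finite_subset)
  qed
  then show ?thesis using assms(2) unfolding is_partition_def by simp
qed

locale contr =
  fixes S :: "'a set" and A :: "'a set set" and B C :: "'a \<Rightarrow> 'a" and v :: "'a set" and a b :: 'a
  assumes fin: "finite S" and part: "is_partition S A" and iB: "invol S B" and iC: "invol S C"
    and vA: "v \<in> A" and av: "a \<in> v" and bv: "b \<in> v" and ab: "a \<noteq> b"
begin

lemma vS: "v \<subseteq> S" using part vA unfolding is_partition_def by auto
lemma aS: "a \<in> S" using vS av by auto
lemma bS: "b \<in> S" using vS bv by auto
lemma AS: "u \<in> A \<Longrightarrow> u \<subseteq> S" using part unfolding is_partition_def by auto

lemma A_other: "u \<in> A \<Longrightarrow> u \<noteq> v \<Longrightarrow> u \<inter> v = {}"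
  using part vA unfolding is_partition_def by auto

lemma A_a: "u \<in> A \<Longrightarrow> a \<in> u \<Longrightarrow> u = v"
  using A_other av by blast
lemma A_b: "u \<in> A \<Longrightarrow> b \<in> u \<Longrightarrow> u = v"
  using A_other bv by blast

lemma part': "is_partition (S - {a,b}) (cA a b A)"
  unfolding is_partition_def
proof (intro conjI)
  show "\<forall>B\<in>cA a b A. B \<noteq> {}" unfolding cA_def by auto
  show "\<forall>B1\<in>cA a b A. \<forall>B2\<in>cA a b A. B1 \<noteq> B2 \<longrightarrow> B1 \<inter> B2 = {}"
    using part unfolding cA_def is_partition_def by auto
  show "\<Union>(cA a b A) = S - {a,b}"
  proof
    show "\<Union>(cA a b A) \<subseteq> S - {a,b}" using part unfolding cA_def is_partition_def by auto
    show "S - {a,b} \<subseteq> \<Union>(cA a b A)"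
    proof
      fix x assume x: "x \<in> S - {a,b}"
      then obtain u where u: "u \<in> A" "x \<in> u" using part unfolding is_partition_def by auto
      then have "u - {a,b} \<in> cA a b A" "x \<in> u - {a,b}" using x unfolding cA_def by auto
      then show "x \<in> \<Union>(cA a b A)" by blast
    qed
  qed
qed

lemma iB': "invol (S - {a,b}) (rew a b B)" by (rule invol_rew[OF iB aS bS ab])
lemma iC': "invol (S - {a,b}) (rew a b C)" by (rule invol_rew[OF iC aS bS ab])

lemma cardS: "card S = card (S - {a,b}) + 2"
proof -
  have "card (S - {a,b}) = card S - 2" using aS bS ab fin by (simp add: card_Diff_subset)
  moreover have "card S \<ge> 2" using aS bS ab fin
    by (metis card_2_iff card_mono empty_subsetI insert_subset)
  ultimately show ?thesis by linarith
qed

end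

lemma ceq_trans: "(x,y) \<in> ceq S0 F \<Longrightarrow> (y,z) \<in> ceq S0 F \<Longrightarrow> (x,z) \<in> ceq S0 F"
  by (auto simp: ceq_def intro: rtrancl_trans)
lemma ceq_sym: "(x,y) \<in> ceq S0 F \<Longrightarrow> (y,x) \<in> ceq S0 F"
  by (auto simp: ceq_def intro: rtrancl_hrel_sym)
lemma ceq_refl: "x \<in> S0 \<Longrightarrow> (x,x) \<in> ceq S0 F"
  by (auto simp: ceq_def)
lemma ceq_in: "(x,y) \<in> ceq S0 F \<Longrightarrow> x \<in> S0 \<and> y \<in> S0"
  by (auto simp: ceq_def)
lemma hrel_ceq_step: "(x,y) \<in> ceq S0 F \<Longrightarrow> (y,z) \<in> hrel F \<Longrightarrow> z \<in> S0 \<Longrightarrow> (x,z) \<in> ceq S0 F"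
  by (auto simp: ceq_def)

context contr
begin

lemma hA_old:
  assumes AF: "A \<subseteq> F" and e: "e \<in> cA a b A" and xy: "x \<in> e" "y \<in> e"
  shows "(x,y) \<in> ceq S F"
proof -
  obtain u where u: "u \<in> A" "e = u - {a,b}" using e unfolding cA_def by blast
  have uS: "u \<subseteq> S" by (rule AS[OF u(1)])
  have "u \<in> F" using AF u(1) by blast
  moreover have "x \<in> u" "y \<in> u" using xy u(2) by auto
  ultimately show ?thesis using uS by (intro edge_in_ceq[of u F x y S]) auto
qed

lemma medges_mem: "x \<in> S0 \<Longrightarrow> {x, M x} \<in> medges S0 M"
  unfolding medges_def by (rule imageI)

lemma rew_edge_old:
  assumes M: "invol S M" and MF: "medges S M \<subseteq> F" and abF: "(a,b) \<in> ceq S F"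
    and x: "x \<in> S - {a,b}"
  shows "(x, rew a b M x) \<in> ceq S F"
proof -
  have Ma: "M a \<in> S" "M (M a) = a" using M aS unfolding invol_def by auto
  have Mb: "M b \<in> S" "M (M b) = b" using M bS unfolding invol_def by auto
  have Mx: "M x \<in> S" "M (M x) = x" using M x unfolding invol_def by auto
  have ea: "(M a, a) \<in> ceq S F"
    using MF medges_mem[OF aS, of M] aS Ma(1) by (intro edge_in_ceq[of "{a, M a}"]) auto
  have eb: "(b, M b) \<in> ceq S F"
    using MF medges_mem[OF bS, of M] bS Mb(1) by (intro edge_in_ceq[of "{b, M b}"]) auto
  have ea': "(M b, b) \<in> ceq S F" using eb by (rule ceq_sym)
  have eb': "(a, M a) \<in> ceq S F" using ea by (rule ceq_sym)
  have ba: "(b,a) \<in> ceq S F" using abF by (rule ceq_sym)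
  show ?thesis
  proof (cases "M x = a")
    case True
    then have "x = M a" using Mx(2) by simp
    then have "(x, M b) \<in> ceq S F" using ceq_trans[OF ceq_trans[OF ea abF] eb] by simp
    then show ?thesis using True unfolding rew_def by simp
  next
    case False
    show ?thesis
    proof (cases "M x = b")
      case True
      then have "x = M b" using Mx(2) by simp
      then have "(x, M a) \<in> ceq S F" using ceq_trans[OF ceq_trans[OF ea' ba] eb'] by simp
      then show ?thesis using True False unfolding rew_def by simp
    next
      case False2: False
      have "x \<in> S" using x by simp
      have "(x, M x) \<in> ceq S F"
        using MF medges_mem[OF \<open>x \<in> S\<close>, of M] \<open>x \<in> S\<close> Mx(1) by (intro edge_in_ceq[of "{x, M x}"]) auto
      then show ?thesis using False False2 unfolding rew_def by simp
    qed
  qed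
qed

lemma hM_old:
  assumes M: "invol S M" and MF: "medges S M \<subseteq> F" and abF: "(a,b) \<in> ceq S F"
    and e: "e \<in> medges (S - {a,b}) (rew a b M)" and xy: "x \<in> e" "y \<in> e"
  shows "(x,y) \<in> ceq S F"
proof -
  obtain z where z: "z \<in> S - {a,b}" "e = {z, rew a b M z}" using e unfolding medges_def by auto
  have zz: "(z, rew a b M z) \<in> ceq S F" by (rule rew_edge_old[OF M MF abF z(1)])
  have S1: "z \<in> S" "rew a b M z \<in> S" using ceq_in[OF zz] by auto
  show ?thesis using xy z zz ceq_sym[OF zz] ceq_refl[OF S1(1)] ceq_refl[OF S1(2)] by auto
qed

lemma U_cA: "\<Union>(cA a b A) \<subseteq> S - {a,b}" using part' unfolding is_partition_def by auto
lemma U_mB': "\<Union>(medges (S - {a,b}) (rew a b B)) \<subseteq> S - {a,b}" by (rule medges_sub[OF iB'])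
lemma U_mC': "\<Union>(medges (S - {a,b}) (rew a b C)) \<subseteq> S - {a,b}" by (rule medges_sub[OF iC'])

lemma ab_in: "A \<subseteq> F \<Longrightarrow> (a,b) \<in> ceq S F"
  using vA av bv aS bS by (intro edge_in_ceq[of v]) auto

lemma subX:
  assumes M: "invol S M"
  shows "ceq (S - {a,b}) (cA a b A \<union> medges (S - {a,b}) (rew a b M)) \<subseteq> ceq S (A \<union> medges S M)"
proof (rule ceq_sub_gen[OF equiv_ceq])
  show "S - {a,b} \<subseteq> S" by auto
  show "\<Union>(cA a b A \<union> medges (S - {a,b}) (rew a b M)) \<subseteq> S - {a,b}"
    using U_cA medges_sub[OF invol_rew[OF M aS bS ab]] by auto
  have abF: "(a,b) \<in> ceq S (A \<union> medges S M)" by (rule ab_in) auto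
  fix e x y assume e: "e \<in> cA a b A \<union> medges (S - {a,b}) (rew a b M)" and xy: "x \<in> e" "y \<in> e"
  show "(x,y) \<in> ceq S (A \<union> medges S M)"
  proof (cases "e \<in> cA a b A")
    case True
    show ?thesis by (rule hA_old[OF _ True xy]) blast
  next
    case False
    then have e2: "e \<in> medges (S - {a,b}) (rew a b M)" using e by blast
    show ?thesis by (rule hM_old[OF M _ abF e2 xy]) blast
  qed
qed

lemma subT:
  "ceq (S - {a,b}) (cA a b A \<union> medges (S - {a,b}) (rew a b B) \<union> medges (S - {a,b}) (rew a b C))
    \<subseteq> ceq S (A \<union> medges S B \<union> medges S C)"
proof (rule ceq_sub_gen[OF equiv_ceq])
  show "S - {a,b} \<subseteq> S" by auto
  show "\<Union>(cA a b A \<union> medges (S - {a,b}) (rew a b B) \<union> medges (S - {a,b}) (rew a b C)) \<subseteq> S - {a,b}"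
    using U_cA U_mB' U_mC' by auto
  have abF: "(a,b) \<in> ceq S (A \<union> medges S B \<union> medges S C)" by (rule ab_in) auto
  fix e x y assume e: "e \<in> cA a b A \<union> medges (S - {a,b}) (rew a b B) \<union> medges (S - {a,b}) (rew a b C)"
    and xy: "x \<in> e" "y \<in> e"
  show "(x,y) \<in> ceq S (A \<union> medges S B \<union> medges S C)"
  proof (cases "e \<in> cA a b A")
    case True
    show ?thesis by (rule hA_old[OF _ True xy]) blast
  next
    case False
    show ?thesis
    proof (cases "e \<in> medges (S - {a,b}) (rew a b B)")
      case True
      show ?thesis by (rule hM_old[OF iB _ abF True xy]) blast
    next
      case False2: False
      then have e2: "e \<in> medges (S - {a,b}) (rew a b C)" using e False by blast
      show ?thesis by (rule hM_old[OF iC _ abF e2 xy]) blast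
    qed
  qed
qed

lemma subD:
  "ceq (S - {a,b}) (medges (S - {a,b}) (rew a b B) \<union> medges (S - {a,b}) (rew a b C))
    \<subseteq> ceq S (insert {a,b} (medges S B \<union> medges S C))"
proof (rule ceq_sub_gen[OF equiv_ceq])
  show "S - {a,b} \<subseteq> S" by auto
  show "\<Union>(medges (S - {a,b}) (rew a b B) \<union> medges (S - {a,b}) (rew a b C)) \<subseteq> S - {a,b}"
    using U_mB' U_mC' by auto
  have abF: "(a,b) \<in> ceq S (insert {a,b} (medges S B \<union> medges S C))"
    using aS bS by (intro edge_in_ceq[of "{a,b}"]) auto
  fix e x y assume e: "e \<in> medges (S - {a,b}) (rew a b B) \<union> medges (S - {a,b}) (rew a b C)"
    and xy: "x \<in> e" "y \<in> e"
  show "(x,y) \<in> ceq S (insert {a,b} (medges S B \<union> medges S C))"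
  proof (cases "e \<in> medges (S - {a,b}) (rew a b B)")
    case True
    show ?thesis by (rule hM_old[OF iB _ abF True xy]) blast
  next
    case False
    then have e2: "e \<in> medges (S - {a,b}) (rew a b C)" using e by blast
    show ?thesis by (rule hM_old[OF iC _ abF e2 xy]) blast
  qed
qed

lemma hrel_keep_M:
  assumes M: "invol S M" and x: "x \<in> S - {a,b}" and y: "y \<in> S - {a,b}"
    and xy: "(x,y) \<in> hrel (medges S M)"
  shows "(x,y) \<in> hrel (medges (S - {a,b}) (rew a b M))"
proof -
  have "y = x \<or> y = M x" using xy hrel_medges[OF M] by auto
  then have "y = x \<or> y = rew a b M x" using y unfolding rew_def by auto
  then show ?thesis using hrel_medges[OF invol_rew[OF M aS bS ab]] x by auto
qed

lemma hrel_keep_A: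
  assumes x: "x \<in> S - {a,b}" and y: "y \<in> S - {a,b}" and xy: "(x,y) \<in> hrel A"
  shows "(x,y) \<in> hrel (cA a b A)"
proof -
  obtain u where u: "u \<in> A" "x \<in> u" "y \<in> u" using xy by (rule hrel_E)
  have "u - {a,b} \<in> (\<lambda>u. u - {a,b}) ` A" using u(1) by (rule imageI)
  moreover have "u - {a,b} \<noteq> {}" using u x by auto
  ultimately have "u - {a,b} \<in> cA a b A" unfolding cA_def by blast
  moreover have "x \<in> u - {a,b}" "y \<in> u - {a,b}" using u x y by auto
  ultimately show ?thesis by (intro hrel_I[of "u - {a,b}"])
qed

lemma nb_M:
  assumes M: "invol S M" and x: "x \<in> S - {a,b}" and y: "y \<in> {a,b}"
    and xy: "(x,y) \<in> hrel (medges S M)"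
  shows "x = M y"
proof -
  have "y = x \<or> y = M x" using xy hrel_medges[OF M] by auto
  then have "y = M x" using x y by auto
  then show ?thesis using M x unfolding invol_def by auto
qed

lemma nb_A:
  assumes x: "x \<in> S - {a,b}" and y: "y \<in> {a,b}" and xy: "(x,y) \<in> hrel A"
  shows "x \<in> v - {a,b}"
proof -
  obtain u where u: "u \<in> A" "x \<in> u" "y \<in> u" using xy by (rule hrel_E)
  then have "u = v" using y A_a A_b by auto
  then show ?thesis using u x by auto
qed

end


lemma card_cls3:
  assumes E: "equiv T E" and G: "G1 \<subseteq> T" "G2 \<subseteq> T" "G3 \<subseteq> T"
    and c1: "\<And>x y. x \<in> G1 \<Longrightarrow> y \<in> G1 \<Longrightarrow> (x,y) \<in> E"
    and c2: "\<And>x y. x \<in> G2 \<Longrightarrow> y \<in> G2 \<Longrightarrow> (x,y) \<in> E"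
    and c3: "\<And>x y. x \<in> G3 \<Longrightarrow> y \<in> G3 \<Longrightarrow> (x,y) \<in> E"
    and g: "G1 \<noteq> {} \<Longrightarrow> g1 \<in> G1" "G2 \<noteq> {} \<Longrightarrow> g2 \<in> G2" "G3 \<noteq> {} \<Longrightarrow> g3 \<in> G3"
  shows "card ((\<lambda>p. E `` {p}) ` (G1 \<union> G2 \<union> G3)) \<le>
           (if G1 \<noteq> {} then 1 else 0)
         + (if G2 \<noteq> {} \<and> (\<not> (G1 \<noteq> {}) \<or> (g1,g2) \<notin> E) then 1 else 0)
         + (if G3 \<noteq> {} \<and> (\<not> (G1 \<noteq> {}) \<or> (g1,g3) \<notin> E) \<and> (\<not> (G2 \<noteq> {}) \<or> (g2,g3) \<notin> E) then 1 else 0)"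
proof -
  define I1 where "I1 = (if G1 \<noteq> {} then {E `` {g1}} else {})"
  define I2 where "I2 = (if G2 \<noteq> {} \<and> (\<not> (G1 \<noteq> {}) \<or> (g1,g2) \<notin> E) then {E `` {g2}} else {})"
  define I3 where "I3 = (if G3 \<noteq> {} \<and> (\<not> (G1 \<noteq> {}) \<or> (g1,g3) \<notin> E) \<and> (\<not> (G2 \<noteq> {}) \<or> (g2,g3) \<notin> E) then {E `` {g3}} else {})"
  have cls: "\<And>x y. (x,y) \<in> E \<Longrightarrow> E `` {x} = E `` {y}" using E by (simp add: equiv_class_eq)
  have sym: "\<And>x y. (x,y) \<in> E \<Longrightarrow> (y,x) \<in> E" using E by (meson equivE symE)
  have sub: "(\<lambda>p. E `` {p}) ` (G1 \<union> G2 \<union> G3) \<subseteq> I1 \<union> I2 \<union> I3"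
  proof
    fix L assume "L \<in> (\<lambda>p. E `` {p}) ` (G1 \<union> G2 \<union> G3)"
    then obtain p where p: "p \<in> G1 \<union> G2 \<union> G3" "L = E `` {p}" by blast
    consider (1) "p \<in> G1" | (2) "p \<in> G2" | (3) "p \<in> G3" using p(1) by blast
    then show "L \<in> I1 \<union> I2 \<union> I3"
    proof cases
      case 1
      then have "L = E `` {g1}" using p g c1 cls by blast
      then show ?thesis using 1 unfolding I1_def by auto
    next
      case 2
      then have L2: "L = E `` {g2}" using p g c2 cls by blast
      show ?thesis
      proof (cases "G1 \<noteq> {} \<and> (g1,g2) \<in> E")
        case True
        then have "L = E `` {g1}" using L2 cls sym by metis
        then show ?thesis using True unfolding I1_def by auto
      next
        case False
        then show ?thesis using 2 L2 unfolding I2_def by auto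
      qed
    next
      case 3
      then have L3: "L = E `` {g3}" using p g c3 cls by blast
      show ?thesis
      proof (cases "G1 \<noteq> {} \<and> (g1,g3) \<in> E")
        case True
        then have "L = E `` {g1}" using L3 cls sym by metis
        then show ?thesis using True unfolding I1_def by auto
      next
        case False
        show ?thesis
        proof (cases "G2 \<noteq> {} \<and> (g2,g3) \<in> E")
          case True
          then have L2: "L = E `` {g2}" using L3 cls sym by metis
          show ?thesis
          proof (cases "G1 \<noteq> {} \<and> (g1,g2) \<in> E")
            case True
            then have "L = E `` {g1}" using L2 cls sym by metis
            then show ?thesis using True unfolding I1_def by auto
          next
            case False
            then show ?thesis using \<open>G2 \<noteq> {} \<and> (g2,g3) \<in> E\<close> L2 unfolding I2_def by auto
          qed
        next
          case False2: False
          then show ?thesis using False 3 L3 unfolding I3_def by auto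
        qed
      qed
    qed
  qed
  have "card ((\<lambda>p. E `` {p}) ` (G1 \<union> G2 \<union> G3)) \<le> card (I1 \<union> I2 \<union> I3)"
    by (rule card_mono[OF _ sub]) (simp add: I1_def I2_def I3_def)
  also have "\<dots> \<le> card (I1 \<union> I2) + card I3" by (rule card_Un_le)
  also have "\<dots> \<le> card I1 + card I2 + card I3" using card_Un_le[of I1 I2] by linarith
  finally have "card ((\<lambda>p. E `` {p}) ` (G1 \<union> G2 \<union> G3)) \<le> card I1 + card I2 + card I3" .
  moreover have "card I1 = (if G1 \<noteq> {} then 1 else 0)" by (simp add: I1_def)
  moreover have "card I2 = (if G2 \<noteq> {} \<and> (\<not> (G1 \<noteq> {}) \<or> (g1,g2) \<notin> E) then 1 else 0)" by (simp add: I2_def)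
  moreover have "card I3 = (if G3 \<noteq> {} \<and> (\<not> (G1 \<noteq> {}) \<or> (g1,g3) \<notin> E) \<and> (\<not> (G2 \<noteq> {}) \<or> (g2,g3) \<notin> E) then 1 else 0)"
    by (simp add: I3_def)
  ultimately show ?thesis by linarith
qed

context contr
begin

abbreviation "FT \<equiv> A \<union> medges S B \<union> medges S C"
abbreviation "FT' \<equiv> cA a b A \<union> medges (S - {a,b}) (rew a b B) \<union> medges (S - {a,b}) (rew a b C)"
abbreviation "ET \<equiv> ceq S FT"
abbreviation "ET' \<equiv> ceq (S - {a,b}) FT'"
abbreviation "Ports \<equiv> (v - {a,b}) \<union> ({B a, B b} - {a,b}) \<union> ({C a, C b} - {a,b})"

lemma keep_T:
  assumes x: "x \<in> S - {a,b}" and y: "y \<in> S - {a,b}" and xy: "(x,y) \<in> hrel FT"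
  shows "(x,y) \<in> ET'"
proof -
  have "(x,y) \<in> hrel A \<or> (x,y) \<in> hrel (medges S B) \<or> (x,y) \<in> hrel (medges S C)"
    using xy by (simp add: hrel_Un)
  then have "(x,y) \<in> hrel (cA a b A) \<or> (x,y) \<in> hrel (medges (S - {a,b}) (rew a b B))
      \<or> (x,y) \<in> hrel (medges (S - {a,b}) (rew a b C))"
    using hrel_keep_A[OF x y] hrel_keep_M[OF iB x y] hrel_keep_M[OF iC x y] by blast
  then have "(x,y) \<in> hrel FT'" by (simp add: hrel_Un)
  then show ?thesis using x y by (rule hrel_in_ceq)
qed

lemma hrelFT_S: "(x,y) \<in> hrel FT \<Longrightarrow> x \<in> S \<and> y \<in> S"
proof -
  assume "(x,y) \<in> hrel FT"
  then obtain e where e: "e \<in> FT" "x \<in> e" "y \<in> e" by (rule hrel_E)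
  have "e \<subseteq> S"
  proof (cases "e \<in> A")
    case True then show ?thesis by (rule AS)
  next
    case False
    then have "e \<in> medges S B \<or> e \<in> medges S C" using e(1) by blast
    then show ?thesis using medges_sub[OF iB] medges_sub[OF iC] by (meson Union_upper order_trans)
  qed
  then show ?thesis using e by auto
qed

lemma nb_T:
  assumes x: "x \<in> S - {a,b}" and y: "y \<in> {a,b}" and xy: "(x,y) \<in> hrel FT"
  shows "x \<in> Ports"
proof -
  have "(x,y) \<in> hrel A \<or> (x,y) \<in> hrel (medges S B) \<or> (x,y) \<in> hrel (medges S C)"
    using xy by (simp add: hrel_Un)
  then show ?thesis
  proof (elim disjE)
    assume "(x,y) \<in> hrel A" then show ?thesis using nb_A[OF x y] by blast
  next
    assume "(x,y) \<in> hrel (medges S B)" then have "x = B y" using nb_M[OF iB x y] by blast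
    then show ?thesis using x y by auto
  next
    assume "(x,y) \<in> hrel (medges S C)" then have "x = C y" using nb_M[OF iC x y] by blast
    then show ?thesis using x y by auto
  qed
qed

lemma port_aux:
  assumes "(x,a) \<in> (hrel FT)\<^sup>*"
  shows "x \<in> S - {a,b} \<longrightarrow> (\<exists>p\<in>Ports. (x,p) \<in> ET')"
  using assms
proof (induction rule: converse_rtrancl_induct)
  case base then show ?case by simp
next
  case (step x y)
  show ?case
  proof
    assume x: "x \<in> S - {a,b}"
    have yS: "y \<in> S" using hrelFT_S[OF step.hyps(1)] by simp
    show "\<exists>p\<in>Ports. (x,p) \<in> ET'"
    proof (cases "y \<in> {a,b}")
      case True
      then have "x \<in> Ports" using nb_T[OF x True step.hyps(1)] by blast
      moreover have "(x,x) \<in> ET'" using x by (rule ceq_refl)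
      ultimately show ?thesis by blast
    next
      case False
      then have y: "y \<in> S - {a,b}" using yS by simp
      then obtain p where p: "p \<in> Ports" "(y,p) \<in> ET'" using step.IH by blast
      have "(x,y) \<in> ET'" by (rule keep_T[OF x y step.hyps(1)])
      then have "(x,p) \<in> ET'" using p(2) by (rule ceq_trans)
      then show ?thesis using p(1) by blast
    qed
  qed
qed

lemma abT: "(a,b) \<in> ET" by (rule ab_in) blast

lemma unch_aux:
  assumes x: "x \<in> S - {a,b}" and nx: "(x,a) \<notin> ET" and xy: "(x,y) \<in> (hrel FT)\<^sup>*"
  shows "(x,y) \<in> ET'"
  using xy
proof (induction rule: rtrancl_induct)
  case base then show ?case using x by (rule ceq_refl)
next
  case (step y z)
  have y: "y \<in> S - {a,b}" using ceq_in[OF step.IH] by simp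
  have zS: "z \<in> S" using hrelFT_S[OF step.hyps(2)] by simp
  have xyT: "(x,y) \<in> ET" using subT step.IH by blast
  have z: "z \<notin> {a,b}"
  proof
    assume za: "z \<in> {a,b}"
    have "(y,z) \<in> ET" using step.hyps(2) y zS by (intro hrel_in_ceq) auto
    then have xz: "(x,z) \<in> ET" by (rule ceq_trans[OF xyT])
    have "(z,a) \<in> ET"
    proof (cases "z = a")
      case True then show ?thesis using ceq_refl[OF aS] by simp
    next
      case False then have "z = b" using za by simp
      then show ?thesis using ceq_sym[OF abT] by simp
    qed
    then have "(x,a) \<in> ET" by (rule ceq_trans[OF xz])
    then show False using nx by simp
  qed
  have "(y,z) \<in> ET'" using keep_T[OF y _ step.hyps(2)] zS z by simp
  then show ?case by (rule ceq_trans[OF step.IH])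
qed

lemma T_bound:
  "card ((S - {a,b}) // ET') + 1 \<le> card (S // ET) + card ((\<lambda>p. ET' `` {p}) ` Ports)"
proof (rule quot_card_upper[where ?K0.0 = "ET `` {a}"])
  show "finite S" by (rule fin)
  show "S - {a,b} \<subseteq> S" by auto
  show "equiv S ET" by (rule equiv_ceq)
  show "equiv (S - {a,b}) ET'" by (rule equiv_ceq)
  show "ET' \<subseteq> ET" by (rule subT)
  show "ET `` {a} \<in> S // ET" using aS by (rule quotientI)
  have "finite v" using vS fin finite_subset by blast
  then show "finite Ports" by simp
  show "\<And>x y. x \<in> S - {a,b} \<Longrightarrow> x \<notin> ET `` {a} \<Longrightarrow> (x,y) \<in> ET \<Longrightarrow> (x,y) \<in> ET'"
  proof -
    fix x y assume x: "x \<in> S - {a,b}" and nxa: "x \<notin> ET `` {a}" and xy: "(x,y) \<in> ET"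
    have nx: "(x,a) \<notin> ET"
    proof (intro notI)
      assume "(x,a) \<in> ET" then have "(a,x) \<in> ET" by (rule ceq_sym)
      then show False using nxa by blast
    qed
    have "(x,y) \<in> (hrel FT)\<^sup>*" using xy by (simp add: ceq_def)
    then show "(x,y) \<in> ET'" by (rule unch_aux[OF x nx])
  qed
  show "\<And>x. x \<in> S - {a,b} \<Longrightarrow> x \<in> ET `` {a} \<Longrightarrow> \<exists>p\<in>Ports. (x,p) \<in> ET'"
  proof -
    fix x assume x: "x \<in> S - {a,b}" and xa: "x \<in> ET `` {a}"
    then have "(a,x) \<in> ET" by simp
    then have "(x,a) \<in> ET" by (rule ceq_sym)
    then have "(x,a) \<in> (hrel FT)\<^sup>*" by (simp add: ceq_def)
    then have "x \<in> S - {a,b} \<longrightarrow> (\<exists>p\<in>Ports. (x,p) \<in> ET')" by (rule port_aux)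
    then show "\<exists>p\<in>Ports. (x,p) \<in> ET'" using x by blast
  qed
qed

end


lemma medges_mem0: "x \<in> S0 \<Longrightarrow> {x, M x} \<in> medges S0 M"
  unfolding medges_def by (rule imageI)

lemma edge_M: "invol S0 M \<Longrightarrow> medges S0 M \<subseteq> F \<Longrightarrow> x \<in> S0 \<Longrightarrow> (x, M x) \<in> ceq S0 F"
proof -
  assume M: "invol S0 M" and MF: "medges S0 M \<subseteq> F" and x: "x \<in> S0"
  have "{x, M x} \<in> F" using MF medges_mem0[OF x, of M] by blast
  moreover have "M x \<in> S0" using M x unfolding invol_def by blast
  ultimately show ?thesis using x by (intro edge_in_ceq[of "{x, M x}"]) auto
qed

context contr
begin

abbreviation "g1 \<equiv> (SOME x. x \<in> v - {a,b})"

lemma g1_in: "v - {a,b} \<noteq> {} \<Longrightarrow> g1 \<in> v - {a,b}"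
proof -
  assume "v - {a,b} \<noteq> {}"
  then obtain x where "x \<in> v - {a,b}" by blast
  then show ?thesis by (rule someI)
qed

lemma M_a: "invol S M \<Longrightarrow> M a \<in> S \<and> M a \<noteq> a \<and> M (M a) = a"
  using aS unfolding invol_def by blast
lemma M_b: "invol S M \<Longrightarrow> M b \<in> S \<and> M b \<noteq> b \<and> M (M b) = b"
  using bS unfolding invol_def by blast

lemma Ma_S': "invol S M \<Longrightarrow> M a \<noteq> b \<Longrightarrow> M a \<in> S - {a,b}"
  using M_a by blast
lemma Mb_ne_a: "invol S M \<Longrightarrow> M a \<noteq> b \<Longrightarrow> M b \<noteq> a"
proof
  assume M: "invol S M" and "M a \<noteq> b" and "M b = a"
  then have "M a = M (M b)" by simp
  also have "\<dots> = b" using M_b[OF M] by simp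
  finally show False using \<open>M a \<noteq> b\<close> by simp
qed
lemma Mb_S': "invol S M \<Longrightarrow> M a \<noteq> b \<Longrightarrow> M b \<in> S - {a,b}"
  using M_b Mb_ne_a by blast
lemma Ma_eq: "invol S M \<Longrightarrow> M a = b \<Longrightarrow> M b = a"
proof -
  assume M: "invol S M" and h: "M a = b"
  have "M (M a) = a" using M_a[OF M] by simp
  then show "M b = a" using h by simp
qed

lemma edge_v: "A \<subseteq> F \<Longrightarrow> x \<in> v \<Longrightarrow> (a, x) \<in> ceq S F"
proof -
  assume AF: "A \<subseteq> F" and x: "x \<in> v"
  have "v \<in> F" using AF vA by blast
  then show ?thesis using x av vS by (intro edge_in_ceq[of v]) auto
qed

lemma X_bound:
  assumes M: "invol S M"
    and E2: "ceq (S - {a,b}) (cA a b A \<union> medges (S - {a,b}) (rew a b M)) \<subseteq> E2"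
  shows "ncomp S (A \<union> medges S M) + (if v - {a,b} \<noteq> {} \<and> M a \<noteq> b \<and> (g1, M a) \<notin> E2 then 1 else 0)
         \<le> ncomp (S - {a,b}) (cA a b A \<union> medges (S - {a,b}) (rew a b M))
            + (if \<not> (v - {a,b} \<noteq> {}) \<and> \<not> (M a \<noteq> b) then 1 else 0)"
proof -
  define E where "E = ceq S (A \<union> medges S M)"
  define E' where "E' = ceq (S - {a,b}) (cA a b A \<union> medges (S - {a,b}) (rew a b M))"
  define J where "J = {K \<in> S // E. K \<inter> (S - {a,b}) = {}}"
  have eq: "equiv S E" "equiv (S - {a,b}) E'" unfolding E_def E'_def by (rule equiv_ceq)+
  have sub: "E' \<subseteq> E" unfolding E_def E'_def by (rule subX[OF M])
  have Esym: "\<And>x y. (x,y) \<in> E \<Longrightarrow> (y,x) \<in> E" unfolding E_def by (rule ceq_sym)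
  have Etr: "\<And>x y z. (x,y) \<in> E \<Longrightarrow> (y,z) \<in> E \<Longrightarrow> (x,z) \<in> E" unfolding E_def by (rule ceq_trans)
  have abE: "(a,b) \<in> E" unfolding E_def by (rule ab_in) blast
  have J: "card J \<le> (if E `` {a} \<subseteq> {a,b} then 1 else 0)"
    unfolding J_def by (rule J_bound[OF eq(1) abE fin])
  have aMa: "(a, M a) \<in> E" unfolding E_def by (rule edge_M[OF M _ aS]) blast
  have av': "\<And>x. x \<in> v \<Longrightarrow> (a,x) \<in> E" unfolding E_def by (rule edge_v) blast
  have Jc: "E `` {a} \<subseteq> {a,b} \<Longrightarrow> v - {a,b} = {} \<and> M a = b"
  proof -
    assume H: "E `` {a} \<subseteq> {a,b}"
    have "v \<subseteq> E `` {a}" using av' by blast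
    then have "v - {a,b} = {}" using H by blast
    moreover have "M a \<in> {a,b}" using aMa H by blast
    then have "M a = b" using M_a[OF M] by blast
    ultimately show ?thesis by blast
  qed
  have L1: "card (S // E) \<le> card ((S - {a,b}) // E') + card J"
    unfolding J_def by (rule quot_card_lower(1)[OF fin _ eq sub]) blast
  show ?thesis
  proof (cases "v - {a,b} \<noteq> {} \<and> M a \<noteq> b \<and> (g1, M a) \<notin> E2")
    case True
    have g: "g1 \<in> v - {a,b}" using g1_in True by blast
    have gS: "g1 \<in> S - {a,b}" using g vS by blast
    have MaS: "M a \<in> S - {a,b}" using Ma_S'[OF M] True by blast
    have h1: "(g1, M a) \<in> E" using Etr[OF Esym[OF av'] aMa] g by blast
    have h2: "(g1, M a) \<notin> E'" using True E2 unfolding E'_def by blast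
    have L2: "card (S // E) + 1 \<le> card ((S - {a,b}) // E') + card J"
      unfolding J_def by (rule quot_card_lower(2)[OF fin _ eq sub gS MaS h1 h2]) blast
    have "card J = 0" using J Jc True by (auto split: if_splits)
    then show ?thesis using L2 True unfolding ncomp_def E_def E'_def by simp
  next
    case False
    have Jb: "card J \<le> (if \<not> (v - {a,b} \<noteq> {}) \<and> \<not> (M a \<noteq> b) then 1 else 0)" using J Jc by (auto split: if_splits)
    have z: "(if v - {a,b} \<noteq> {} \<and> M a \<noteq> b \<and> (g1, M a) \<notin> E2 then 1 else 0) = (0::nat)"
      using False by simp
    have "card (S // E) \<le> card ((S - {a,b}) // E') + (if \<not> (v - {a,b} \<noteq> {}) \<and> \<not> (M a \<noteq> b) then 1 else 0)"
      using L1 Jb by linarith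
    then show ?thesis using z unfolding ncomp_def E_def E'_def by linarith
  qed
qed

abbreviation "FD \<equiv> medges S B \<union> medges S C"
abbreviation "FD' \<equiv> medges (S - {a,b}) (rew a b B) \<union> medges (S - {a,b}) (rew a b C)"

lemma D1: "ncomp S FD \<le> card (S // ceq S (insert {a,b} FD)) + (if (a,b) \<notin> ceq S FD then 1 else 0)"
proof (cases "(a,b) \<in> ceq S FD")
  case True
  then show ?thesis using ceq_insert_edge_same[OF True] unfolding ncomp_def by simp
next
  case False
  then show ?thesis using ncomp_insert_edge[OF fin aS bS, of FD] unfolding ncomp_def by simp
qed

lemma D2:
  assumes E2: "ceq (S - {a,b}) FD' \<subseteq> E2"
  shows "card (S // ceq S (insert {a,b} FD)) + (if B a \<noteq> b \<and> C a \<noteq> b \<and> (B a, C a) \<notin> E2 then 1 else 0)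
         \<le> ncomp (S - {a,b}) FD' + (if \<not> (B a \<noteq> b) \<and> \<not> (C a \<noteq> b) then 1 else 0)"
proof -
  define E where "E = ceq S (insert {a,b} FD)"
  define E' where "E' = ceq (S - {a,b}) FD'"
  define J where "J = {K \<in> S // E. K \<inter> (S - {a,b}) = {}}"
  have eq: "equiv S E" "equiv (S - {a,b}) E'" unfolding E_def E'_def by (rule equiv_ceq)+
  have sub: "E' \<subseteq> E" unfolding E_def E'_def by (rule subD)
  have Esym: "\<And>x y. (x,y) \<in> E \<Longrightarrow> (y,x) \<in> E" unfolding E_def by (rule ceq_sym)
  have Etr: "\<And>x y z. (x,y) \<in> E \<Longrightarrow> (y,z) \<in> E \<Longrightarrow> (x,z) \<in> E" unfolding E_def by (rule ceq_trans)
  have abE: "(a,b) \<in> E" unfolding E_def using aS bS by (intro edge_in_ceq[of "{a,b}"]) auto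
  have J: "card J \<le> (if E `` {a} \<subseteq> {a,b} then 1 else 0)"
    unfolding J_def by (rule J_bound[OF eq(1) abE fin])
  have aBa: "(a, B a) \<in> E" unfolding E_def by (rule edge_M[OF iB _ aS]) blast
  have aCa: "(a, C a) \<in> E" unfolding E_def by (rule edge_M[OF iC _ aS]) blast
  have Jc: "E `` {a} \<subseteq> {a,b} \<Longrightarrow> B a = b \<and> C a = b"
  proof -
    assume H: "E `` {a} \<subseteq> {a,b}"
    have "B a \<in> {a,b}" "C a \<in> {a,b}" using aBa aCa H by blast+
    then show ?thesis using M_a[OF iB] M_a[OF iC] by blast
  qed
  have L1: "card (S // E) \<le> card ((S - {a,b}) // E') + card J"
    unfolding J_def by (rule quot_card_lower(1)[OF fin _ eq sub]) blast
  show ?thesis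
  proof (cases "B a \<noteq> b \<and> C a \<noteq> b \<and> (B a, C a) \<notin> E2")
    case True
    have BaS: "B a \<in> S - {a,b}" using Ma_S'[OF iB] True by blast
    have CaS: "C a \<in> S - {a,b}" using Ma_S'[OF iC] True by blast
    have h1: "(B a, C a) \<in> E" using Etr[OF Esym[OF aBa] aCa] .
    have h2: "(B a, C a) \<notin> E'" using True E2 unfolding E'_def by blast
    have L2: "card (S // E) + 1 \<le> card ((S - {a,b}) // E') + card J"
      unfolding J_def by (rule quot_card_lower(2)[OF fin _ eq sub BaS CaS h1 h2]) blast
    have "card J = 0" using J Jc True by (auto split: if_splits)
    then show ?thesis using L2 True unfolding ncomp_def E_def E'_def by simp
  next
    case False
    have Jb: "card J \<le> (if \<not> (B a \<noteq> b) \<and> \<not> (C a \<noteq> b) then 1 else 0)" using J Jc by (auto split: if_splits)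
    have z: "(if B a \<noteq> b \<and> C a \<noteq> b \<and> (B a, C a) \<notin> E2 then 1 else 0) = (0::nat)"
      using False by simp
    have "card (S // E) \<le> card ((S - {a,b}) // E') + (if \<not> (B a \<noteq> b) \<and> \<not> (C a \<noteq> b) then 1 else 0)"
      using L1 Jb by linarith
    then show ?thesis using z unfolding ncomp_def E_def E'_def by linarith
  qed
qed

lemma path_prop:
  assumes nD: "(a,b) \<notin> ceq S FD"
  shows "(B a, C a) \<in> ceq (S - {a,b}) FD'"
proof (rule ccontr)
  assume nBC: "(B a, C a) \<notin> ceq (S - {a,b}) FD'"
  define ED where "ED = ceq S FD"
  define ED' where "ED' = ceq (S - {a,b}) FD'"
  have nD': "(a,b) \<notin> ED" using nD unfolding ED_def .
  have Etr: "\<And>x y z. (x,y) \<in> ED \<Longrightarrow> (y,z) \<in> ED \<Longrightarrow> (x,z) \<in> ED" unfolding ED_def by (rule ceq_trans)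
  have Etr': "\<And>x y z. (x,y) \<in> ED' \<Longrightarrow> (y,z) \<in> ED' \<Longrightarrow> (x,z) \<in> ED'" unfolding ED'_def by (rule ceq_trans)
  have nBC': "(B a, C a) \<notin> ED'" using nBC unfolding ED'_def .
  have eB: "\<And>x. x \<in> S \<Longrightarrow> (x, B x) \<in> ED" unfolding ED_def by (rule edge_M[OF iB]) blast+
  have eC: "\<And>x. x \<in> S \<Longrightarrow> (x, C x) \<in> ED" unfolding ED_def by (rule edge_M[OF iC]) blast+
  have Bx: "\<And>x. x \<in> S \<Longrightarrow> B x \<in> S \<and> B x \<noteq> x \<and> B (B x) = x" using iB unfolding invol_def by blast
  have Cx: "\<And>x. x \<in> S \<Longrightarrow> C x \<in> S \<and> C x \<noteq> x \<and> C (C x) = x" using iC unfolding invol_def by blast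
  have Bab: "B a \<noteq> b" using eB[OF aS] nD' by auto
  have BaS: "B a \<in> S - {a,b}" using Ma_S'[OF iB Bab] .
  have eB': "\<And>x. x \<in> S - {a,b} \<Longrightarrow> B x \<noteq> a \<Longrightarrow> B x \<noteq> b \<Longrightarrow> (x, B x) \<in> ED'"
  proof -
    fix x assume x: "x \<in> S - {a,b}" and h: "B x \<noteq> a" "B x \<noteq> b"
    have "(x, rew a b B x) \<in> ED'" unfolding ED'_def by (rule edge_M[OF iB' _ x]) blast
    then show "(x, B x) \<in> ED'" using h unfolding rew_def by simp
  qed
  have eC': "\<And>x. x \<in> S - {a,b} \<Longrightarrow> C x \<noteq> a \<Longrightarrow> C x \<noteq> b \<Longrightarrow> (x, C x) \<in> ED'"
  proof -
    fix x assume x: "x \<in> S - {a,b}" and h: "C x \<noteq> a" "C x \<noteq> b"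
    have "(x, rew a b C x) \<in> ED'" unfolding ED'_def by (rule edge_M[OF iC' _ x]) blast
    then show "(x, C x) \<in> ED'" using h unfolding rew_def by simp
  qed
  define Z where "Z = {x \<in> S - {a,b}. (B a, x) \<in> ED' \<and> (a, x) \<in> ED}"
  have finZ: "finite Z" unfolding Z_def using fin by simp
  have BaZ: "B a \<in> Z" unfolding Z_def using BaS eB[OF aS] ceq_refl[OF BaS] unfolding ED'_def by blast
  have nb: "\<And>x. (a,x) \<in> ED \<Longrightarrow> x \<noteq> b"
    using nD' by blast
  have Cc: "\<And>x. x \<in> Z \<Longrightarrow> C x \<in> Z \<and> C x \<noteq> x \<and> C (C x) = x"
  proof -
    fix x assume x: "x \<in> Z"
    then have xS: "x \<in> S - {a,b}" and xBa: "(B a, x) \<in> ED'" and ax: "(a,x) \<in> ED" unfolding Z_def by auto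
    have C1: "C x \<in> S" "C x \<noteq> x" "C (C x) = x" using Cx xS by auto
    have aCx: "(a, C x) \<in> ED" using Etr[OF ax eC] xS by blast
    have Cxa: "C x \<noteq> a"
    proof
      assume "C x = a"
      then have "x = C a" using C1(3) by simp
      then show False using xBa nBC' by simp
    qed
    have Cxb: "C x \<noteq> b" using nb[OF aCx] .
    have "(x, C x) \<in> ED'" using eC'[OF xS Cxa Cxb] .
    then have "(B a, C x) \<in> ED'" by (rule Etr'[OF xBa])
    then show "C x \<in> Z \<and> C x \<noteq> x \<and> C (C x) = x" unfolding Z_def using C1 Cxa Cxb aCx by blast
  qed
  have Bc: "\<And>x. x \<in> Z - {B a} \<Longrightarrow> B x \<in> Z - {B a} \<and> B x \<noteq> x \<and> B (B x) = x"
  proof -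
    fix x assume x: "x \<in> Z - {B a}"
    then have xS: "x \<in> S - {a,b}" and xBa: "(B a, x) \<in> ED'" and ax: "(a,x) \<in> ED" and xne: "x \<noteq> B a"
      unfolding Z_def by auto
    have B1: "B x \<in> S" "B x \<noteq> x" "B (B x) = x" using Bx xS by auto
    have aBx: "(a, B x) \<in> ED" using Etr[OF ax eB] xS by blast
    have Bxa: "B x \<noteq> a"
    proof
      assume "B x = a"
      then have "x = B a" using B1(3) by simp
      then show False using xne by simp
    qed
    have Bxb: "B x \<noteq> b" using nb[OF aBx] .
    have "(x, B x) \<in> ED'" using eB'[OF xS Bxa Bxb] .
    then have "(B a, B x) \<in> ED'" by (rule Etr'[OF xBa])
    moreover have "B x \<noteq> B a"
    proof
      assume "B x = B a"
      then have "B (B x) = B (B a)" by simp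
      then have "x = a" using B1(3) Bx[OF aS] by simp
      then show False using xS by simp
    qed
    ultimately show "B x \<in> Z - {B a} \<and> B x \<noteq> x \<and> B (B x) = x" unfolding Z_def using B1 Bxa Bxb aBx by blast
  qed
  have ev1: "even (card Z)" by (rule even_closed[OF finZ Cc])
  have ev2: "even (card (Z - {B a}))" by (rule even_closed[OF _ Bc]) (simp add: finZ)
  have "card (Z - {B a}) = card Z - 1" using BaZ finZ by simp
  moreover have "card Z > 0" using BaZ finZ by (auto simp: card_gt_0_iff)
  ultimately show False using ev1 ev2 by presburger
qed

lemma finA: "finite A"
proof -
  have "A \<subseteq> Pow S" using AS by blast
  then show ?thesis using fin finite_subset by blast
qed

lemma nA_bound: "card (cA a b A) + (if \<not> (v - {a,b} \<noteq> {}) then 1 else 0) \<le> card A"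
proof (cases "v - {a,b} = {}")
  case True
  have "cA a b A \<subseteq> (\<lambda>u. u - {a,b}) ` (A - {v})"
  proof
    fix w assume "w \<in> cA a b A"
    then obtain u where u: "u \<in> A" "w = u - {a,b}" "w \<noteq> {}" unfolding cA_def by blast
    then have "u \<noteq> v" using True by blast
    then show "w \<in> (\<lambda>u. u - {a,b}) ` (A - {v})" using u by blast
  qed
  then have "card (cA a b A) \<le> card ((\<lambda>u. u - {a,b}) ` (A - {v}))"
    using finA by (intro card_mono) auto
  also have "\<dots> \<le> card (A - {v})" using finA by (intro card_image_le) simp
  also have "\<dots> = card A - 1" using vA finA by simp
  finally have "card (cA a b A) \<le> card A - 1" .
  moreover have "card A > 0" using vA finA by (auto simp: card_gt_0_iff)
  ultimately show ?thesis using True by simp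
next
  case False
  have "cA a b A \<subseteq> (\<lambda>u. u - {a,b}) ` A" unfolding cA_def by blast
  then have "card (cA a b A) \<le> card ((\<lambda>u. u - {a,b}) ` A)" using finA by (intro card_mono) auto
  also have "\<dots> \<le> card A" using finA by (rule card_image_le)
  finally show ?thesis using False by simp
qed

lemma n2_bound: "card {u \<in> A. 2 \<le> card u} \<le> card {u \<in> cA a b A. 2 \<le> card u} + 1"
proof -
  have fin2: "finite {u \<in> cA a b A. 2 \<le> card u}"
  proof -
    have "finite (cA a b A)" unfolding cA_def using finA by simp
    then show ?thesis by simp
  qed
  have sub: "{u \<in> A. 2 \<le> card u} - {v} \<subseteq> {u \<in> cA a b A. 2 \<le> card u}"
  proof
    fix u assume u: "u \<in> {u \<in> A. 2 \<le> card u} - {v}"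
    then have uA: "u \<in> A" "u \<noteq> v" "2 \<le> card u" by auto
    have "u \<inter> v = {}" using A_other[OF uA(1,2)] .
    then have "u - {a,b} = u" using av bv by blast
    moreover have "u \<noteq> {}" using uA(3) by auto
    moreover have "u - {a,b} \<in> (\<lambda>u. u - {a,b}) ` A" by (rule imageI[OF uA(1)])
    ultimately have "u \<in> cA a b A" unfolding cA_def by simp
    then show "u \<in> {u \<in> cA a b A. 2 \<le> card u}" using uA by blast
  qed
  have "card ({u \<in> A. 2 \<le> card u} - {v}) \<le> card {u \<in> cA a b A. 2 \<le> card u}"
    by (rule card_mono[OF fin2 sub])
  moreover have "card {u \<in> A. 2 \<le> card u} \<le> card ({u \<in> A. 2 \<le> card u} - {v}) + 1"
    by (simp add: card_Diff_singleton_if) arith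
  ultimately show ?thesis by linarith
qed


lemma G2e: "invol S M \<Longrightarrow> ({M a, M b} - {a,b} \<noteq> {}) = (M a \<noteq> b)"
proof -
  assume M: "invol S M"
  show ?thesis
  proof (cases "M a = b")
    case True
    then have "M b = a" by (rule Ma_eq[OF M])
    then show ?thesis using True by auto
  next
    case False
    then have "M a \<in> S - {a,b}" by (rule Ma_S'[OF M])
    then show ?thesis using False by auto
  qed
qed

lemma m_bound:
  "card ((\<lambda>p. ET' `` {p}) ` ((v - {a,b}) \<union> ({B a, B b} - {a,b}) \<union> ({C a, C b} - {a,b})))
   \<le> (if v - {a,b} \<noteq> {} then 1 else 0)
     + (if B a \<noteq> b \<and> (\<not> (v - {a,b} \<noteq> {}) \<or> (g1, B a) \<notin> ET') then 1 else 0)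
     + (if C a \<noteq> b \<and> (\<not> (v - {a,b} \<noteq> {}) \<or> (g1, C a) \<notin> ET') \<and> (\<not> (B a \<noteq> b) \<or> (B a, C a) \<notin> ET') then 1 else 0)"
proof -
  have eq: "equiv (S - {a,b}) ET'" by (rule equiv_ceq)
  have G1: "v - {a,b} \<subseteq> S - {a,b}" using vS by blast
  have G2: "{B a, B b} - {a,b} \<subseteq> S - {a,b}" using M_a[OF iB] M_b[OF iB] by blast
  have G3: "{C a, C b} - {a,b} \<subseteq> S - {a,b}" using M_a[OF iC] M_b[OF iC] by blast
  have c1: "\<And>x y. x \<in> v - {a,b} \<Longrightarrow> y \<in> v - {a,b} \<Longrightarrow> (x,y) \<in> ET'"
  proof -
    fix x y assume x: "x \<in> v - {a,b}" and y: "y \<in> v - {a,b}"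
    have "v - {a,b} \<in> (\<lambda>u. u - {a,b}) ` A" using vA by (rule imageI)
    then have "v - {a,b} \<in> cA a b A" using x unfolding cA_def by blast
    then show "(x,y) \<in> ET'" using x y G1 by (intro edge_in_ceq[of "v - {a,b}"]) auto
  qed
  have cM: "\<And>M x y. invol S M \<Longrightarrow> medges (S - {a,b}) (rew a b M) \<subseteq> FT' \<Longrightarrow>
      x \<in> {M a, M b} - {a,b} \<Longrightarrow> y \<in> {M a, M b} - {a,b} \<Longrightarrow> (x,y) \<in> ET'"
  proof -
    fix M x y assume M: "invol S M" and MF: "medges (S - {a,b}) (rew a b M) \<subseteq> FT'"
      and x: "x \<in> {M a, M b} - {a,b}" and y: "y \<in> {M a, M b} - {a,b}"
    have Mab: "M a \<noteq> b" using x G2e[OF M] by blast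
    have MaS: "M a \<in> S - {a,b}" by (rule Ma_S'[OF M Mab])
    have MbS: "M b \<in> S - {a,b}" by (rule Mb_S'[OF M Mab])
    have "rew a b M (M a) = M b" using M_a[OF M] unfolding rew_def by simp
    moreover have "(M a, rew a b M (M a)) \<in> ET'"
      by (rule edge_M[OF invol_rew[OF M aS bS ab] MF MaS])
    ultimately have e: "(M a, M b) \<in> ET'" by simp
    have "x \<in> {M a, M b}" "y \<in> {M a, M b}" using x y by auto
    then show "(x,y) \<in> ET'" using e ceq_sym[OF e] ceq_refl[OF MaS] ceq_refl[OF MbS] by auto
  qed
  have c2: "\<And>x y. x \<in> {B a, B b} - {a,b} \<Longrightarrow> y \<in> {B a, B b} - {a,b} \<Longrightarrow> (x,y) \<in> ET'"
    by (rule cM[OF iB]) blast+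
  have c3: "\<And>x y. x \<in> {C a, C b} - {a,b} \<Longrightarrow> y \<in> {C a, C b} - {a,b} \<Longrightarrow> (x,y) \<in> ET'"
    by (rule cM[OF iC]) blast+
  have g1: "v - {a,b} \<noteq> {} \<Longrightarrow> g1 \<in> v - {a,b}" by (rule g1_in)
  have g2: "{B a, B b} - {a,b} \<noteq> {} \<Longrightarrow> B a \<in> {B a, B b} - {a,b}"
    using G2e[OF iB] Ma_S'[OF iB] by blast
  have g3: "{C a, C b} - {a,b} \<noteq> {} \<Longrightarrow> C a \<in> {C a, C b} - {a,b}"
    using G2e[OF iC] Ma_S'[OF iC] by blast
  show ?thesis
    using card_cls3[OF eq G1 G2 G3 c1 c2 c3 g1 g2 g3] unfolding G2e[OF iB] G2e[OF iC] .
qed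

end


lemma bool_facts:
  assumes nd: "\<not> nd \<or> (iB \<and> iC \<and> \<not>s23)"
    and tr1: "\<not>(iv \<and> iB \<and> iC \<and> \<not>s12 \<and> \<not>s23 \<and> s13)"
    and tr2: "\<not>(iv \<and> iB \<and> iC \<and> \<not>s12 \<and> \<not>s13 \<and> s23)"
    and tr3: "\<not>(iv \<and> iB \<and> iC \<and> \<not>s13 \<and> \<not>s23 \<and> s12)"
  shows "(if \<not>iv \<and> \<not>iB then 1 else 0) + (if \<not>iv \<and> \<not>iC then 1 else 0) + (if nd then 1 else 0)
          + (if \<not>iB \<and> \<not>iC then 1 else 0) + 1
          + 2 * ((if iv then 1 else 0) + (if iB \<and> (\<not>iv \<or> s12) then 1 else 0)
                 + (if iC \<and> (\<not>iv \<or> s13) \<and> (\<not>iB \<or> s23) then 1 else 0))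
         \<le> (4::nat) + (if iv \<and> iB \<and> s12 then 1 else 0) + (if iv \<and> iC \<and> s13 then 1 else 0)
            + (if iB \<and> iC \<and> s23 then 1 else 0)"
   and "(if \<not>iv \<and> \<not>iB then 1 else 0) + (if \<not>iv \<and> \<not>iC then 1 else 0)
          + ((if iv then 1 else 0) + (if iB \<and> (\<not>iv \<or> s12) then 1 else 0)
                 + (if iC \<and> (\<not>iv \<or> s13) \<and> (\<not>iB \<or> s23) then 1 else 0))
         \<le> (1::nat) + (if iv \<and> iB \<and> s12 then 1 else 0) + (if iv \<and> iC \<and> s13 then 1 else 0)
            + (if \<not>iv then 1 else 0)"
  using assms
  by (cases iv; cases iB; cases iC; cases s12; cases s13; cases s23; cases nd; simp)+

lemma arith_lin:
  fixes c0 c1 r t n2 nA c0' c1' r' rp t' n2' nA' sS sS' m gX jX gY jY nd jD gD mb iv :: nat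
  assumes IH1: "c0' + c1' + r' + n2' \<le> sS' + 2*t'"
    and IH2: "c0' + c1' \<le> nA' + t'"
    and sS: "sS = sS' + 2"
    and X: "c0 + gX \<le> c0' + jX"
    and Y: "c1 + gY \<le> c1' + jY"
    and D1: "r \<le> rp + nd"
    and D2: "rp + gD \<le> r' + jD"
    and T: "t' + 1 \<le> t + m"
    and m: "m \<le> mb"
    and n2: "n2 \<le> n2' + 1"
    and nA: "nA' + iv \<le> nA"
    and BQ: "jX + jY + nd + jD + 1 + 2*mb \<le> 4 + gX + gY + gD"
    and BP: "jX + jY + mb \<le> 1 + gX + gY + iv"
  shows "c0 + c1 + r + n2 \<le> sS + 2*t \<and> c0 + c1 \<le> nA + t"
  using assms by linarith

lemma ceq_medges:
  assumes M: "invol S M"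
  shows "ceq S (medges S M) = {(x,y). x \<in> S \<and> (y = x \<or> y = M x)}"
proof
  show "ceq S (medges S M) \<subseteq> {(x,y). x \<in> S \<and> (y = x \<or> y = M x)}"
  proof
    fix p assume "p \<in> ceq S (medges S M)"
    then obtain x y where p: "p = (x,y)" "x \<in> S" "(x,y) \<in> (hrel (medges S M))\<^sup>*"
      by (auto simp: ceq_def)
    have Mx: "M (M x) = x" using M p(2) unfolding invol_def by blast
    have "y = x \<or> y = M x" using p(3)
    proof (induction rule: rtrancl_induct)
      case base then show ?case by simp
    next
      case (step y z)
      have "z = y \<or> z = M y" using step.hyps(2) hrel_medges[OF M] by blast
      then show ?case using step.IH Mx by auto
    qed
    then show "p \<in> {(x,y). x \<in> S \<and> (y = x \<or> y = M x)}" using p by auto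
  qed
  show "{(x,y). x \<in> S \<and> (y = x \<or> y = M x)} \<subseteq> ceq S (medges S M)"
  proof
    fix p assume "p \<in> {(x,y). x \<in> S \<and> (y = x \<or> y = M x)}"
    then obtain x y where p: "p = (x,y)" "x \<in> S" "y = x \<or> y = M x" by blast
    then have h: "(x,y) \<in> hrel (medges S M)" using hrel_medges[OF M] by blast
    have "y \<in> S" using p M unfolding invol_def by auto
    then have "(x,y) \<in> ceq S (medges S M)" using h p(2) by (intro hrel_in_ceq)
    then show "p \<in> ceq S (medges S M)" using p(1) by simp
  qed
qed

lemma quot_medges:
  assumes M: "invol S M"
  shows "S // ceq S (medges S M) = medges S M"
proof -
  have cls: "\<And>x. x \<in> S \<Longrightarrow> ceq S (medges S M) `` {x} = {x, M x}"
    using M unfolding ceq_medges[OF M] invol_def by auto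
  have "S // ceq S (medges S M) = (\<Union>x\<in>S. {ceq S (medges S M) `` {x}})" unfolding quotient_def by simp
  also have "\<dots> = (\<Union>x\<in>S. {{x, M x}})" using cls by simp
  also have "\<dots> = medges S M" unfolding medges_def by (simp add: UNION_singleton_eq_range)
  finally show ?thesis .
qed

lemma medges_partition:
  assumes M: "invol S M"
  shows "is_partition S (medges S M)"
  unfolding is_partition_def
proof (intro conjI)
  show "\<forall>u\<in>medges S M. u \<noteq> {}" unfolding medges_def by auto
  show "\<Union>(medges S M) = S" using M unfolding medges_def invol_def by auto
  show "\<forall>u\<in>medges S M. \<forall>w\<in>medges S M. u \<noteq> w \<longrightarrow> u \<inter> w = {}"
  proof (intro ballI impI)
    fix u w assume u: "u \<in> medges S M" and w: "w \<in> medges S M" and uw: "u \<noteq> w"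
    obtain x where x: "x \<in> S" "u = {x, M x}" using u unfolding medges_def by auto
    obtain y where y: "y \<in> S" "w = {y, M y}" using w unfolding medges_def by auto
    have key: "\<And>z t. z \<in> S \<Longrightarrow> t \<in> {z, M z} \<Longrightarrow> {z, M z} = {t, M t}"
      using M unfolding invol_def by auto
    show "u \<inter> w = {}"
    proof (rule ccontr)
      assume "u \<inter> w \<noteq> {}"
      then obtain t where t: "t \<in> u" "t \<in> w" by blast
      have "u = {t, M t}" using key[OF x(1)] t(1) x(2) by simp
      moreover have "w = {t, M t}" using key[OF y(1)] t(2) y(2) by simp
      ultimately show False using uw by simp
    qed
  qed
qed

lemma card_medges:
  assumes fin: "finite S" and M: "invol S M"
  shows "card S = 2 * card (medges S M)"
proof -
  have "card S = (\<Sum>u\<in>medges S M. card u)"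
    by (rule partition_card_sum[OF fin medges_partition[OF M]])
  also have "\<dots> = (\<Sum>u\<in>medges S M. 2)"
  proof (rule sum.cong)
    fix u assume "u \<in> medges S M"
    then obtain x where "x \<in> S" "u = {x, M x}" unfolding medges_def by auto
    then show "card u = 2" using M unfolding invol_def by auto
  qed simp
  finally show ?thesis by simp
qed

lemma ncomp_medges:
  assumes fin: "finite S" and M: "invol S M"
  shows "card S = 2 * ncomp S (medges S M)"
  unfolding ncomp_def quot_medges[OF M] by (rule card_medges[OF fin M])

lemma ceq_triv_A:
  assumes A: "\<forall>u\<in>A. \<forall>x\<in>u. \<forall>y\<in>u. x = y"
  shows "ceq S (A \<union> F) = ceq S F"
proof -
  have hA: "hrel A \<subseteq> Id" using A by (auto simp: hrel_def)
  have "(hrel A \<union> hrel F)\<^sup>* = (hrel F)\<^sup>*"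
  proof (rule rtrancl_subset)
    show "hrel F \<subseteq> hrel A \<union> hrel F" by blast
    show "hrel A \<union> hrel F \<subseteq> (hrel F)\<^sup>*" using hA by auto
  qed
  then show ?thesis unfolding ceq_def hrel_Un by simp
qed

lemma main_ineq:
  assumes "finite S" "is_partition S A" "invol S B" "invol S C"
  shows "ncomp S (A \<union> medges S B) + ncomp S (A \<union> medges S C) + ncomp S (medges S B \<union> medges S C)
           + card {u\<in>A. 2 \<le> card u} \<le> card S + 2 * ncomp S (A \<union> medges S B \<union> medges S C)
       \<and> ncomp S (A \<union> medges S B) + ncomp S (A \<union> medges S C) \<le> card A + ncomp S (A \<union> medges S B \<union> medges S C)"
  using assms
proof (induction "card S" arbitrary: S A B C rule: less_induct)
  case less
  have fin: "finite S" and part: "is_partition S A" and iB: "invol S B" and iC: "invol S C"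
    using less.prems by auto
  show ?case
  proof (cases "\<exists>v\<in>A. \<exists>a\<in>v. \<exists>b\<in>v. a \<noteq> b")
    case False
    then have triv: "\<forall>u\<in>A. \<forall>x\<in>u. \<forall>y\<in>u. x = y" by blast
    have c0: "ncomp S (A \<union> medges S B) = ncomp S (medges S B)"
      unfolding ncomp_def ceq_triv_A[OF triv] ..
    have c1: "ncomp S (A \<union> medges S C) = ncomp S (medges S C)"
      unfolding ncomp_def ceq_triv_A[OF triv] ..
    have t: "ncomp S (A \<union> medges S B \<union> medges S C) = ncomp S (medges S B \<union> medges S C)"
      unfolding ncomp_def Un_assoc ceq_triv_A[OF triv] ..
    have eB: "card S = 2 * ncomp S (medges S B)" by (rule ncomp_medges[OF fin iB])
    have eC: "card S = 2 * ncomp S (medges S C)" by (rule ncomp_medges[OF fin iC])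
    have n2: "{u\<in>A. 2 \<le> card u} = {}"
    proof -
      have "\<And>u. u \<in> A \<Longrightarrow> card u \<le> 1"
      proof -
        fix u assume u: "u \<in> A"
        have "finite u" using u part fin unfolding is_partition_def by (meson Union_upper finite_subset)
        then show "card u \<le> 1" using triv u card_le_Suc0_iff_eq by (metis One_nat_def)
      qed
      then have "\<And>u. u \<in> A \<Longrightarrow> \<not> 2 \<le> card u" by (metis not_less_eq_eq numeral_2_eq_2 One_nat_def)
      then show ?thesis by blast
    qed
    have cA: "card S = card A"
    proof -
      have "card S = (\<Sum>u\<in>A. card u)" by (rule partition_card_sum[OF fin part])
      also have "\<dots> = (\<Sum>u\<in>A. 1)"
      proof (rule sum.cong)
        fix u assume u: "u \<in> A"
        then have "u \<noteq> {}" using part unfolding is_partition_def by blast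
        then obtain x where "x \<in> u" by blast
        then have "u = {x}" using triv u by blast
        then show "card u = 1" by simp
      qed simp
      finally show ?thesis by simp
    qed
    have n2': "card {u\<in>A. 2 \<le> card u} = 0" by (simp only: n2 card.empty)
    show ?thesis using c0 c1 t eB eC n2' cA by linarith
  next
    case True
    then obtain v a b where vab: "v \<in> A" "a \<in> v" "b \<in> v" "a \<noteq> b" by blast
    interpret c: contr S A B C v a b using fin part iB iC vab by unfold_locales auto
    have IH: "card ((S - {a,b}) // ceq (S - {a,b}) (cA a b A \<union> medges (S - {a,b}) (rew a b B)))
        + card ((S - {a,b}) // ceq (S - {a,b}) (cA a b A \<union> medges (S - {a,b}) (rew a b C)))
        + card ((S - {a,b}) // ceq (S - {a,b}) (medges (S - {a,b}) (rew a b B) \<union> medges (S - {a,b}) (rew a b C)))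
        + card {u\<in>cA a b A. 2 \<le> card u}
        \<le> card (S - {a,b}) + 2 * card ((S - {a,b}) // ceq (S - {a,b}) (cA a b A \<union> medges (S - {a,b}) (rew a b B) \<union> medges (S - {a,b}) (rew a b C)))
       \<and> card ((S - {a,b}) // ceq (S - {a,b}) (cA a b A \<union> medges (S - {a,b}) (rew a b B)))
        + card ((S - {a,b}) // ceq (S - {a,b}) (cA a b A \<union> medges (S - {a,b}) (rew a b C)))
        \<le> card (cA a b A) + card ((S - {a,b}) // ceq (S - {a,b}) (cA a b A \<union> medges (S - {a,b}) (rew a b B) \<union> medges (S - {a,b}) (rew a b C)))"
      unfolding ncomp_def[symmetric]
    proof (rule less.hyps)
      show "card (S - {a,b}) < card S" using c.cardS by simp
      show "finite (S - {a,b})" using fin by simp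
      show "is_partition (S - {a,b}) (cA a b A)" by (rule c.part')
      show "invol (S - {a,b}) (rew a b B)" by (rule c.iB')
      show "invol (S - {a,b}) (rew a b C)" by (rule c.iC')
    qed
    let ?ET' = "ceq (S - {a,b}) (cA a b A \<union> medges (S - {a,b}) (rew a b B) \<union> medges (S - {a,b}) (rew a b C))"
    have subX: "ceq (S - {a,b}) (cA a b A \<union> medges (S - {a,b}) (rew a b B)) \<subseteq> ?ET'" by (rule ceq_mono) blast
    have subY: "ceq (S - {a,b}) (cA a b A \<union> medges (S - {a,b}) (rew a b C)) \<subseteq> ?ET'" by (rule ceq_mono) blast
    have subD: "ceq (S - {a,b}) (medges (S - {a,b}) (rew a b B) \<union> medges (S - {a,b}) (rew a b C)) \<subseteq> ?ET'"
      by (rule ceq_mono) blast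
    note X = c.X_bound[OF iB subX, unfolded ncomp_def]
    note Y = c.X_bound[OF iC subY, unfolded ncomp_def]
    note D1 = c.D1[unfolded ncomp_def]
    note D2 = c.D2[OF subD, unfolded ncomp_def]
    note T = c.T_bound
    note m = c.m_bound
    note n2 = c.n2_bound
    note nA = c.nA_bound
    note cS = c.cardS
    have ndc: "\<not> ((a,b) \<notin> ceq S (medges S B \<union> medges S C))
        \<or> (B a \<noteq> b \<and> C a \<noteq> b \<and> \<not> ((B a, C a) \<notin> ?ET'))"
    proof (cases "(a,b) \<in> ceq S (medges S B \<union> medges S C)")
      case True then show ?thesis by simp
    next
      case False
      have aB: "(a, B a) \<in> ceq S (medges S B \<union> medges S C)" by (rule edge_M[OF iB _ c.aS]) blast
      have aC: "(a, C a) \<in> ceq S (medges S B \<union> medges S C)" by (rule edge_M[OF iC _ c.aS]) blast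
      have "B a \<noteq> b" using aB False by auto
      moreover have "C a \<noteq> b" using aC False by auto
      moreover have "(B a, C a) \<in> ?ET'" using c.path_prop[OF False] subD by blast
      ultimately show ?thesis by simp
    qed
    have tr: "\<And>x y z. (x,y) \<in> ?ET' \<Longrightarrow> (y,z) \<in> ?ET' \<Longrightarrow> (x,z) \<in> ?ET'" by (rule ceq_trans)
    have sy: "\<And>x y. (x,y) \<in> ?ET' \<Longrightarrow> (y,x) \<in> ?ET'" by (rule ceq_sym)
    let ?g1 = "SOME x. x \<in> v - {a,b}"
    have tr1: "\<not>(v - {a,b} \<noteq> {} \<and> B a \<noteq> b \<and> C a \<noteq> b \<and> \<not>((?g1, B a) \<notin> ?ET') \<and> \<not>((B a, C a) \<notin> ?ET') \<and> (?g1, C a) \<notin> ?ET')"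
      using tr by blast
    have tr2: "\<not>(v - {a,b} \<noteq> {} \<and> B a \<noteq> b \<and> C a \<noteq> b \<and> \<not>((?g1, B a) \<notin> ?ET') \<and> \<not>((?g1, C a) \<notin> ?ET') \<and> (B a, C a) \<notin> ?ET')"
      using tr sy by blast
    have tr3: "\<not>(v - {a,b} \<noteq> {} \<and> B a \<noteq> b \<and> C a \<noteq> b \<and> \<not>((?g1, C a) \<notin> ?ET') \<and> \<not>((B a, C a) \<notin> ?ET') \<and> (?g1, B a) \<notin> ?ET')"
      using tr sy by blast
    note BQ = bool_facts(1)[OF ndc tr1 tr2 tr3]
    note BP = bool_facts(2)[OF ndc tr1 tr2 tr3]
    have "card (S // ceq S (A \<union> medges S B)) + card (S // ceq S (A \<union> medges S C))
          + card (S // ceq S (medges S B \<union> medges S C)) + card {u\<in>A. 2 \<le> card u}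
          \<le> card S + 2 * card (S // ceq S (A \<union> medges S B \<union> medges S C))
        \<and> card (S // ceq S (A \<union> medges S B)) + card (S // ceq S (A \<union> medges S C))
          \<le> card A + card (S // ceq S (A \<union> medges S B \<union> medges S C))"
      by (rule arith_lin[OF IH[THEN conjunct1] IH[THEN conjunct2] cS X Y D1 D2 T m n2 nA BQ BP])
    then show ?thesis unfolding ncomp_def .
  qed
qed


lemma part_disj: "is_partition S P \<Longrightarrow> B \<in> P \<Longrightarrow> C \<in> P \<Longrightarrow> B \<noteq> C \<Longrightarrow> B \<inter> C = {}"
  unfolding is_partition_def by blast
lemma part_ne: "is_partition S P \<Longrightarrow> B \<in> P \<Longrightarrow> B \<noteq> {}"
  unfolding is_partition_def by blast
lemma part_sub: "is_partition S P \<Longrightarrow> B \<in> P \<Longrightarrow> B \<subseteq> S"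
  unfolding is_partition_def by blast
lemma part_cover: "is_partition S P \<Longrightarrow> x \<in> S \<Longrightarrow> \<exists>B\<in>P. x \<in> B"
  unfolding is_partition_def by blast

definition mate :: "'a set set \<Rightarrow> 'a \<Rightarrow> 'a" where
  "mate P x = (SOME y. y \<noteq> x \<and> {x,y} \<in> P)"

lemma mate_props:
  assumes part: "is_partition S P" and pm: "\<forall>u\<in>P. card u = 2" and x: "x \<in> S"
  shows "mate P x \<noteq> x \<and> {x, mate P x} \<in> P"
proof -
  obtain u where u: "u \<in> P" "x \<in> u" using part_cover[OF part x] by blast
  have "card u = 2" using pm u by blast
  then obtain p q where pq: "u = {p,q}" "p \<noteq> q" by (meson card_2_iff)
  have "\<exists>y. y \<noteq> x \<and> u = {x,y}"
  proof (cases "x = p")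
    case True then show ?thesis using pq by (intro exI[of _ q]) simp
  next
    case False then have "x = q" using pq u(2) by blast
    then show ?thesis using pq by (intro exI[of _ p]) (simp add: insert_commute)
  qed
  then have "\<exists>y. y \<noteq> x \<and> {x,y} \<in> P" using u by blast
  then show ?thesis unfolding mate_def by (rule someI_ex)
qed

lemma mate_unique:
  assumes part: "is_partition S P" and y: "y \<noteq> x" "{x,y} \<in> P" and z: "z \<noteq> x" "{x,z} \<in> P"
  shows "y = z"
proof -
  have "{x,y} = {x,z}"
  proof (rule ccontr)
    assume "{x,y} \<noteq> {x,z}"
    then have "{x,y} \<inter> {x,z} = {}" by (rule part_disj[OF part y(2) z(2)])
    then show False by blast
  qed
  then have "y \<in> {x,z}" by blast
  then show ?thesis using y(1) by blast
qed

lemma invol_mate: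
  assumes part: "is_partition S P" and pm: "\<forall>u\<in>P. card u = 2"
  shows "invol S (mate P)"
  unfolding invol_def
proof
  fix x assume x: "x \<in> S"
  have m: "mate P x \<noteq> x" "{x, mate P x} \<in> P" using mate_props[OF part pm x] by auto
  have mS: "mate P x \<in> S" using part_sub[OF part m(2)] by blast
  have m2: "mate P (mate P x) \<noteq> mate P x" "{mate P x, mate P (mate P x)} \<in> P"
    using mate_props[OF part pm mS] by auto
  have mx: "{mate P x, x} \<in> P" using m(2) by (simp add: insert_commute)
  have xm: "x \<noteq> mate P x" using m(1) by simp
  have "mate P (mate P x) = x" by (rule mate_unique[OF part m2(1) m2(2) xm mx])
  then show "mate P x \<in> S \<and> mate P x \<noteq> x \<and> mate P (mate P x) = x" using mS m by simp
qed

lemma medges_mate: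
  assumes part: "is_partition S P" and pm: "\<forall>u\<in>P. card u = 2"
  shows "medges S (mate P) = P"
proof
  show "medges S (mate P) \<subseteq> P" unfolding medges_def using mate_props[OF part pm] by blast
  show "P \<subseteq> medges S (mate P)"
  proof
    fix u assume u: "u \<in> P"
    obtain p q where pq: "u = {p,q}" "p \<noteq> q" using pm u by (meson card_2_iff)
    have pS: "p \<in> S" using part_sub[OF part u] pq by blast
    have m: "mate P p \<noteq> p" "{p, mate P p} \<in> P" using mate_props[OF part pm pS] by auto
    have "q = mate P p" using mate_unique[OF part _ _ m] pq u by auto
    then have "u = {p, mate P p}" using pq by simp
    then show "u \<in> medges S (mate P)" using pS unfolding medges_def by blast
  qed
qed

lemma quotient_partition:
  assumes "equiv S E"
  shows "is_partition S (S // E)"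
  unfolding is_partition_def
proof (intro conjI)
  show "\<forall>B\<in>S // E. B \<noteq> {}" using assms in_quotient_imp_non_empty by blast
  show "\<forall>B\<in>S // E. \<forall>C\<in>S // E. B \<noteq> C \<longrightarrow> B \<inter> C = {}" using assms quotient_disj by blast
  show "\<Union>(S // E) = S" using assms by (rule Union_quotient)
qed

lemma refines_antisym:
  assumes p1: "is_partition S R1" and p2: "is_partition S R2"
    and r12: "refines R1 R2" and r21: "refines R2 R1"
  shows "R1 = R2"
proof -
  have key: "\<And>R1 R2. is_partition S R1 \<Longrightarrow> is_partition S R2 \<Longrightarrow> refines R1 R2 \<Longrightarrow> refines R2 R1 \<Longrightarrow> R1 \<subseteq> R2"
  proof
    fix R1 R2 W assume p1: "is_partition S R1" and p2: "is_partition S R2"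
      and r12: "refines R1 R2" and r21: "refines R2 R1" and W: "W \<in> R1"
    obtain W2 where W2: "W2 \<in> R2" "W \<subseteq> W2" using r12 W unfolding refines_def by blast
    obtain W3 where W3: "W3 \<in> R1" "W2 \<subseteq> W3" using r21 W2 unfolding refines_def by blast
    have "W \<noteq> {}" by (rule part_ne[OF p1 W])
    then have "W \<inter> W3 \<noteq> {}" using W2 W3 by blast
    then have "W = W3" using part_disj[OF p1 W W3(1)] by blast
    then have "W = W2" using W2 W3 by blast
    then show "W \<in> R2" using W2 by simp
  qed
  show ?thesis using key[OF p1 p2 r12 r21] key[OF p2 p1 r21 r12] by blast
qed

lemma refines_quot:
  assumes "P \<subseteq> F" "\<Union>F \<subseteq> S" "\<forall>u\<in>P. u \<noteq> {}"
  shows "refines P (S // ceq S F)"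
  unfolding refines_def
proof
  fix u assume u: "u \<in> P"
  then obtain x where x: "x \<in> u" using assms(3) by blast
  have uS: "u \<subseteq> S" using u assms(1,2) by blast
  have "u \<subseteq> ceq S F `` {x}"
  proof
    fix y assume "y \<in> u"
    then have "(x,y) \<in> ceq S F" using u x uS assms(1) by (intro edge_in_ceq[of u]) auto
    then show "y \<in> ceq S F `` {x}" by simp
  qed
  moreover have "ceq S F `` {x} \<in> S // ceq S F" using x uS by (intro quotientI) blast
  ultimately show "\<exists>C\<in>S // ceq S F. u \<subseteq> C" by blast
qed

lemma quot_min:
  assumes R: "is_partition S R" and FR: "refines F R" and FS: "\<Union>F \<subseteq> S"
  shows "refines (S // ceq S F) R"
  unfolding refines_def
proof
  fix K assume "K \<in> S // ceq S F"
  then obtain x where x: "x \<in> S" "K = ceq S F `` {x}" by (auto elim: quotientE)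
  obtain W where W: "W \<in> R" "x \<in> W" using part_cover[OF R x(1)] by blast
  have "\<And>y. (x,y) \<in> (hrel F)\<^sup>* \<Longrightarrow> y \<in> W"
  proof -
    fix y assume "(x,y) \<in> (hrel F)\<^sup>*"
    then show "y \<in> W"
    proof (induction rule: rtrancl_induct)
      case base then show ?case using W by simp
    next
      case (step y z)
      obtain e where e: "e \<in> F" "y \<in> e" "z \<in> e" using step.hyps(2) by (rule hrel_E)
      obtain W' where W': "W' \<in> R" "e \<subseteq> W'" using FR e(1) unfolding refines_def by blast
      have "y \<in> W \<inter> W'" using step.IH e W' by blast
      then have "W = W'" using part_disj[OF R W(1) W'(1)] by blast
      then show ?case using e W' by blast
    qed
  qed
  then have "K \<subseteq> W" using x by (auto simp: ceq_def)
  then show "\<exists>C\<in>R. K \<subseteq> C" using W by blast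
qed

lemma join_eq:
  assumes P: "is_partition S P" and Q: "is_partition S Q"
  shows "join S P Q = S // ceq S (P \<union> Q)"
proof -
  let ?R = "S // ceq S (P \<union> Q)"
  have US: "\<Union>(P \<union> Q) \<subseteq> S" using part_sub[OF P] part_sub[OF Q] by blast
  have ne: "\<forall>u\<in>P. u \<noteq> {}" "\<forall>u\<in>Q. u \<noteq> {}" using part_ne[OF P] part_ne[OF Q] by blast+
  have pR: "is_partition S ?R" by (rule quotient_partition[OF equiv_ceq])
  have rP: "refines P ?R" by (rule refines_quot[OF _ US ne(1)]) blast
  have rQ: "refines Q ?R" by (rule refines_quot[OF _ US ne(2)]) blast
  have minR: "\<And>R'. is_partition S R' \<and> refines P R' \<and> refines Q R' \<longrightarrow> refines ?R R'"
  proof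
    fix R' assume h: "is_partition S R' \<and> refines P R' \<and> refines Q R'"
    then have "refines (P \<union> Q) R'" unfolding refines_def by blast
    then show "refines ?R R'" using quot_min[OF _ _ US] h by blast
  qed
  show ?thesis unfolding join_def
  proof (rule the_equality)
    show "is_partition S ?R \<and> refines P ?R \<and> refines Q ?R \<and>
      (\<forall>R'. is_partition S R' \<and> refines P R' \<and> refines Q R' \<longrightarrow> refines ?R R')"
      using pR rP rQ minR by blast
    fix R assume hR: "is_partition S R \<and> refines P R \<and> refines Q R \<and>
      (\<forall>R'. is_partition S R' \<and> refines P R' \<and> refines Q R' \<longrightarrow> refines R R')"
    have "refines R ?R" using hR pR rP rQ by blast
    moreover have "refines ?R R" using minR hR by blast
    ultimately show "R = ?R" using refines_antisym[OF _ pR] hR by blast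
  qed
qed

lemma ceq_eqI:
  assumes "\<Union>F \<subseteq> S" "\<Union>G \<subseteq> S"
    and "\<And>e x y. e \<in> F \<Longrightarrow> x \<in> e \<Longrightarrow> y \<in> e \<Longrightarrow> x \<in> S \<Longrightarrow> y \<in> S \<Longrightarrow> (x,y) \<in> ceq S G"
    and "\<And>e x y. e \<in> G \<Longrightarrow> x \<in> e \<Longrightarrow> y \<in> e \<Longrightarrow> x \<in> S \<Longrightarrow> y \<in> S \<Longrightarrow> (x,y) \<in> ceq S F"
  shows "ceq S F = ceq S G"
proof
  show "ceq S F \<subseteq> ceq S G" by (rule ceq_sub_gen[OF equiv_ceq _ assms(3) assms(1)]) auto
  show "ceq S G \<subseteq> ceq S F" by (rule ceq_sub_gen[OF equiv_ceq _ assms(4) assms(2)]) auto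
qed

lemma join_join:
  assumes P0: "is_partition S P0" and P1: "is_partition S P1" and P: "is_partition S P"
  shows "join S (join S P0 P1) P = S // ceq S (P0 \<union> P1 \<union> P)"
proof -
  let ?E = "ceq S (P0 \<union> P1)"
  have j1: "join S P0 P1 = S // ?E" by (rule join_eq[OF P0 P1])
  have pj: "is_partition S (S // ?E)" by (rule quotient_partition[OF equiv_ceq])
  have j2: "join S (join S P0 P1) P = S // ceq S (S // ?E \<union> P)" unfolding j1 by (rule join_eq[OF pj P])
  have U1: "\<Union>(S // ?E \<union> P) \<subseteq> S" using part_sub[OF pj] part_sub[OF P] by blast
  have U2: "\<Union>(P0 \<union> P1 \<union> P) \<subseteq> S" using part_sub[OF P0] part_sub[OF P1] part_sub[OF P] by blast
  have "ceq S (S // ?E \<union> P) = ceq S (P0 \<union> P1 \<union> P)"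
  proof (rule ceq_eqI[OF U1 U2])
    fix e x y assume e: "e \<in> S // ?E \<union> P" and xy: "x \<in> e" "y \<in> e" "x \<in> S" "y \<in> S"
    show "(x,y) \<in> ceq S (P0 \<union> P1 \<union> P)"
    proof (cases "e \<in> P")
      case True then show ?thesis using xy by (intro edge_in_ceq[of e]) auto
    next
      case False
      then have "e \<in> S // ?E" using e by blast
      then have "(x,y) \<in> ?E" using quotient_eq_iff[OF equiv_ceq \<open>e \<in> S // ?E\<close> \<open>e \<in> S // ?E\<close> xy(1) xy(2)] by simp
      moreover have "?E \<subseteq> ceq S (P0 \<union> P1 \<union> P)" by (rule ceq_mono) blast
      ultimately show ?thesis by blast
    qed
  next
    fix e x y assume e: "e \<in> P0 \<union> P1 \<union> P" and xy: "x \<in> e" "y \<in> e" "x \<in> S" "y \<in> S"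
    show "(x,y) \<in> ceq S (S // ?E \<union> P)"
    proof (cases "e \<in> P")
      case True then show ?thesis using xy by (intro edge_in_ceq[of e]) auto
    next
      case False
      then have "e \<in> P0 \<union> P1" using e by blast
      then have "(x,y) \<in> ?E" using xy by (intro edge_in_ceq[of e]) auto
      then have "y \<in> ?E `` {x}" by simp
      moreover have "x \<in> ?E `` {x}" using ceq_refl[OF xy(3)] by simp
      moreover have "?E `` {x} \<in> S // ?E" using xy(3) by (rule quotientI)
      ultimately show ?thesis using xy(3,4) by (intro edge_in_ceq[of "?E `` {x}"]) auto
    qed
  qed
  then show ?thesis using j2 by simp
qed

lemma final_arith:
  fixes c0 c1 r n k :: nat
  assumes "c0 + c1 + r + n \<le> 2*k + 2" "c0 + c1 \<le> n + 1" "n \<le> k"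
  shows "c0 + c1 \<le> 1 + n \<and> 1 + n \<le> k + 1 \<and> (r > 1 \<longrightarrow> c0 + c1 \<le> k + 1 - r div 2)"
  using assms by presburger

theorem proposition3p1:
  fixes k :: nat and P0 P1 P :: "nat set set"
  assumes "0 < k"
    and "P0 \<in> Part2 (2*k)" and "P1 \<in> Part2 (2*k)" and "P \<in> Part2 (2*k)"
    and "perfect_matching P0" and "perfect_matching P1"
    and "card (join {1..2*k} (join {1..2*k} P0 P1) P) = 1"
  shows "card (join {1..2*k} P0 P) + card (join {1..2*k} P1 P) \<le> 1 + card P
       \<and> 1 + card P \<le> k + 1
       \<and> (card (join {1..2*k} P0 P1) > 1 \<longrightarrow>
           card (join {1..2*k} P0 P) + card (join {1..2*k} P1 P)
             \<le> k + 1 - card (join {1..2*k} P0 P1) div 2)"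
proof -
  let ?S = "{1..2*k}"
  have fin: "finite ?S" by simp
  have cS: "card ?S = 2*k" by simp
  have p0: "is_partition ?S P0" using assms(2) unfolding Part2_def Part_def by blast
  have p1: "is_partition ?S P1" using assms(3) unfolding Part2_def Part_def by blast
  have p: "is_partition ?S P" using assms(4) unfolding Part2_def Part_def by blast
  have pm0: "\<forall>u\<in>P0. card u = 2" using assms(5) unfolding perfect_matching_def .
  have pm1: "\<forall>u\<in>P1. card u = 2" using assms(6) unfolding perfect_matching_def .
  have P2: "\<forall>u\<in>P. 2 \<le> card u" using assms(4) unfolding Part2_def by blast
  have iB: "invol ?S (mate P0)" by (rule invol_mate[OF p0 pm0])
  have iC: "invol ?S (mate P1)" by (rule invol_mate[OF p1 pm1])
  have mB: "medges ?S (mate P0) = P0" by (rule medges_mate[OF p0 pm0])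
  have mC: "medges ?S (mate P1) = P1" by (rule medges_mate[OF p1 pm1])
  have j0: "join ?S P0 P = ?S // ceq ?S (P \<union> medges ?S (mate P0))"
    using join_eq[OF p0 p] mB by (simp add: Un_commute)
  have j1: "join ?S P1 P = ?S // ceq ?S (P \<union> medges ?S (mate P1))"
    using join_eq[OF p1 p] mC by (simp add: Un_commute)
  have j01: "join ?S P0 P1 = ?S // ceq ?S (medges ?S (mate P0) \<union> medges ?S (mate P1))"
    using join_eq[OF p0 p1] mB mC by simp
  have "P0 \<union> P1 \<union> P = P \<union> medges ?S (mate P0) \<union> medges ?S (mate P1)" using mB mC by blast
  then have jt: "join ?S (join ?S P0 P1) P = ?S // ceq ?S (P \<union> medges ?S (mate P0) \<union> medges ?S (mate P1))"
    using join_join[OF p0 p1 p] by simp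
  have M: "ncomp ?S (P \<union> medges ?S (mate P0)) + ncomp ?S (P \<union> medges ?S (mate P1))
      + ncomp ?S (medges ?S (mate P0) \<union> medges ?S (mate P1)) + card {u\<in>P. 2 \<le> card u}
      \<le> card ?S + 2 * ncomp ?S (P \<union> medges ?S (mate P0) \<union> medges ?S (mate P1))
    \<and> ncomp ?S (P \<union> medges ?S (mate P0)) + ncomp ?S (P \<union> medges ?S (mate P1))
      \<le> card P + ncomp ?S (P \<union> medges ?S (mate P0) \<union> medges ?S (mate P1))"
    by (rule main_ineq[OF fin p iB iC])
  have n2: "{u\<in>P. 2 \<le> card u} = P" using P2 by blast
  have t1: "ncomp ?S (P \<union> medges ?S (mate P0) \<union> medges ?S (mate P1)) = 1"
    using assms(7) jt unfolding ncomp_def by simp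
  have nk: "card P \<le> k"
  proof -
    have "card ?S = (\<Sum>u\<in>P. card u)" by (rule partition_card_sum[OF fin p])
    moreover have "(\<Sum>u\<in>P. (2::nat)) \<le> (\<Sum>u\<in>P. card u)" using P2 by (intro sum_mono) blast
    ultimately show ?thesis using cS by simp
  qed
  have A1: "card (join ?S P0 P) + card (join ?S P1 P) + card (join ?S P0 P1) + card P \<le> 2*k + 2"
    using M n2 t1 cS unfolding j0 j1 j01 ncomp_def by simp
  have A2: "card (join ?S P0 P) + card (join ?S P1 P) \<le> card P + 1"
    using M t1 unfolding j0 j1 ncomp_def by simp
  show ?thesis by (rule final_arith[OF A1 A2 nk])
qed


end
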